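(* Let $d\ge2$, $\tau>0$, $2d/3<p\le d$ and $u\in\mathcal E_p$. Then there is $C=C(d,p)$ such that for all $t>0$, $$\|B(u,u)(t)\|_{L^{d/2}}\le C\,\tau^{-3/2+d/p}\,|\!|\!|u|\!|\!|_p^2.$$ In particular $B(u,u)\in L^\infty(0,\infty;L^{d/2}(\mathbb{R}^d))$.
   Context: $\mathcal E_p=\{u\in L^\infty_{\rm loc}(0,\infty;L^p(\mathbb{R}^d)):|\!|\!|u|\!|\!|_p=\operatorname{ess\,sup}_{t>0}t^{1-d/(2p)}\|u(t)\|_{L^p}<\infty\}$. $\mathbb Lz(t)=\tau^{-1}\int_0^t\nabla e^{\tau^{-1}(t-s)\Delta}z(s)\,ds$, $B(u,z)(t)=-\int_0^t\nabla e^{(t-s)\Delta}\cdot(u(s)\mathbb Lz(s))\,ds$, with $e^{t\Delta}$ the heat semigroup on $\mathbb{R}^d$. *)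

theory Defs
  imports "HOL-Analysis.Analysis"
begin

text \<open>Spatial dimension d = CARD('d); points of R^d are of type real^'d.\<close>

definition Lpnorm :: "real \<Rightarrow> ('a::euclidean_space \<Rightarrow> real) \<Rightarrow> ennreal" where
  "Lpnorm p f =
     (let I = (\<integral>\<^sup>+ x. ennreal (\<bar>f x\<bar> powr p) \<partial>lborel)
      in if I = \<infinity> then \<infinity> else ennreal (enn2real I powr (1 / p)))"

definition heat_kernel :: "real \<Rightarrow> real^'d \<Rightarrow> real" where
  "heat_kernel t x = (4 * pi * t) powr (- real CARD('d) / 2) * exp (- (norm x)\<^sup>2 / (4 * t))"

definition grad_heat_kernel :: "real \<Rightarrow> real^'d \<Rightarrow> real^'d" where
  "grad_heat_kernel t x = (- heat_kernel t x / (2 * t)) *\<^sub>R x"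

text \<open>Lz(t) = tau^{-1} int_0^t grad e^{tau^{-1}(t-s) Delta} z(s) ds  (pointwise in x).\<close>
definition Lop :: "real \<Rightarrow> (real \<Rightarrow> real^'d \<Rightarrow> real) \<Rightarrow> real \<Rightarrow> real^'d \<Rightarrow> real^'d" where
  "Lop \<tau> z t x = (1 / \<tau>) *\<^sub>R
     (LINT s:{0<..<t}|lborel. (LINT y|lborel. z s y *\<^sub>R grad_heat_kernel ((t - s) / \<tau>) (x - y)))"

text \<open>B(u,z)(t) = - int_0^t grad e^{(t-s)Delta} . (u(s) Lz(s)) ds  (pointwise in x).\<close>
definition Bop :: "real \<Rightarrow> (real \<Rightarrow> real^'d \<Rightarrow> real) \<Rightarrow> (real \<Rightarrow> real^'d \<Rightarrow> real) \<Rightarrow> real \<Rightarrow> real^'d \<Rightarrow> real" where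
  "Bop \<tau> u z t x = - (LINT s:{0<..<t}|lborel.
      (LINT y|lborel. grad_heat_kernel (t - s) (x - y) \<bullet> (u s y *\<^sub>R Lop \<tau> z s y)))"

definition triple_norm :: "real \<Rightarrow> (real \<Rightarrow> real^'d \<Rightarrow> real) \<Rightarrow> ennreal" where
  "triple_norm p u = Inf {M. AE t in lborel. t > 0 \<longrightarrow>
      ennreal (t powr (1 - real CARD('d) / (2 * p))) * Lpnorm p (u t) \<le> M}"

text \<open>E_p: (jointly measurable representatives of) strongly measurable
  u : (0,oo) -> L^p(R^d) with finite |||u|||_p (this implies L^oo_loc).\<close>
definition Ep :: "real \<Rightarrow> (real \<Rightarrow> real^'d \<Rightarrow> real) set" where
  "Ep p = {u. (\<lambda>(t, x). u t x) \<in> borel_measurable (lborel \<Otimes>\<^sub>M lborel)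
              \<and> triple_norm p u < \<infinity>}"

end

theory Submission
  imports Defs "HOL-Probability.Distributions"
begin



definition ep :: "ennreal \<Rightarrow> real \<Rightarrow> ennreal" where
  "ep x r = (if r = 0 then 1 else if x = top then top else ennreal (enn2real x powr r))"

lemma ep_0[simp]: "ep x 0 = 1" by (simp add: ep_def)
lemma ep_1[simp]: "ep x 1 = x"
  by (cases x) (auto simp: ep_def)
lemma ep_top[simp]: "r \<noteq> 0 \<Longrightarrow> ep top r = top" by (simp add: ep_def)
lemma ep_zero[simp]: "r \<noteq> 0 \<Longrightarrow> ep 0 r = 0" by (simp add: ep_def)
lemma ep_ennreal: "0 \<le> c \<Longrightarrow> r \<noteq> 0 \<Longrightarrow> ep (ennreal c) r = ennreal (c powr r)"
  by (simp add: ep_def)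
lemma ep_one[simp]: "ep 1 r = 1" by (simp add: ep_def)

lemma ep_mult: assumes "r \<ge> 0" shows "ep (x * y) r = ep x r * ep y r"
proof (cases "r = 0")
  case False
  then have r: "r > 0" using assms by simp
  show ?thesis
  proof (cases "x = top \<or> y = top")
    case True
    then show ?thesis using r
      by (cases "x = 0"; cases "y = 0")
         (auto simp: ep_def ennreal_mult_top ennreal_top_mult powr_gt_zero ennreal_mult_eq_top_iff enn2real_eq_0_iff)
  next
    case False
    define a b where "a = enn2real x" and "b = enn2real y"
    have a: "x = ennreal a" "0 \<le> a" and b: "y = ennreal b" "0 \<le> b"
      using False by (auto simp: a_def b_def ennreal_enn2real_if)
    have xy: "x * y = ennreal (a * b)" unfolding a(1) b(1) using a(2) b(2) by (rule ennreal_mult[symmetric])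
    have "ep (x * y) r = ennreal ((a * b) powr r)" unfolding xy using r a b by (simp add: ep_ennreal)
    also have "\<dots> = ep x r * ep y r" using r a b by (simp add: ep_ennreal powr_mult ennreal_mult)
    finally show ?thesis .
  qed
qed simp

lemma ep_add: assumes "a \<ge> 0" "b \<ge> 0" shows "ep x a * ep x b = ep x (a + b)"
proof (cases x)
  case (real c)
  then show ?thesis using assms
    by (cases "a = 0"; cases "b = 0"; cases "c = 0")
       (auto simp: ep_def powr_add ennreal_mult)
next
  case top then show ?thesis using assms
    by (cases "a = 0"; cases "b = 0") (auto simp: ep_def)
qed

lemma ep_ep: assumes "a \<ge> 0" "b \<ge> 0" shows "ep (ep x a) b = ep x (a * b)"
proof (cases x)
  case (real c)
  then show ?thesis using assms
    by (cases "a = 0"; cases "b = 0") (auto simp: ep_def powr_powr)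
next
  case top then show ?thesis using assms
    by (cases "a = 0"; cases "b = 0") (auto simp: ep_def)
qed

lemma ep_mono: assumes "x \<le> y" "r \<ge> 0" shows "ep x r \<le> ep y r"
proof (cases "r = 0")
  case False
  show ?thesis
  proof (cases y)
    case (real c)
    with assms obtain b where "x = ennreal b" "0 \<le> b" "b \<le> c"
      by (metis ennreal_cases ennreal_le_iff ennreal_neq_top top.extremum_uniqueI)
    then show ?thesis using real False assms
      by (auto simp: ep_def intro!: ennreal_leI powr_mono2)
  qed (use False in \<open>simp add: ep_def\<close>)
qed simp

lemma ep_eq_0_iff: "r \<noteq> 0 \<Longrightarrow> ep x r = 0 \<longleftrightarrow> x = 0"
  by (cases x) (auto simp: ep_def)

lemma ep_eq_top_iff: "r \<noteq> 0 \<Longrightarrow> ep x r = top \<longleftrightarrow> x = top"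
  by (cases x) (auto simp: ep_def)

lemma measurable_ep[measurable]:
  assumes [measurable]: "f \<in> borel_measurable M"
  shows "(\<lambda>x. ep (f x) r) \<in> borel_measurable M"
  unfolding ep_def by measurable




lemma amgm_enn:
  assumes "0 < t" "t < 1"
  shows "ep a t * ep b (1 - t) \<le> ennreal t * a + ennreal (1 - t) * b"
proof (cases "a = 0 \<or> b = 0")
  case True then show ?thesis using assms by (auto simp: ep_zero)
next
  case nz: False
  show ?thesis
  proof (cases "a = top \<or> b = top")
    case True then show ?thesis using assms nz
      by (auto simp: ennreal_mult_top ennreal_top_mult)
  next
    case False
    define x y where "x = enn2real a" and "y = enn2real b"
    have a: "a = ennreal x" "0 < x" and b: "b = ennreal y" "0 < y"
      using False nz by (auto simp: x_def y_def ennreal_enn2real_if enn2real_eq_0_iff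
          intro!: enn2real_nonneg order.not_eq_order_implies_strict)
    have "x powr t * y powr (1 - t) \<le> t * x + (1 - t) * y"
      using Youngs_inequality_0[of t "1 - t" x y] assms a b by simp
    then have "ennreal (x powr t * y powr (1 - t)) \<le> ennreal (t * x + (1 - t) * y)"
      by (rule ennreal_leI)
    moreover have "ennreal (t * x + (1 - t) * y) = ennreal t * a + ennreal (1 - t) * b"
      using a b assms by (simp add: ennreal_plus ennreal_mult)
    ultimately show ?thesis using a b assms
      by (simp add: ep_ennreal ennreal_mult)
  qed
qed

lemma holder2:
  assumes [measurable]: "f \<in> borel_measurable M" "g \<in> borel_measurable M"
    and t: "0 \<le> t" "t \<le> 1"
  shows "(\<integral>\<^sup>+x. ep (f x) t * ep (g x) (1 - t) \<partial>M)
          \<le> ep (\<integral>\<^sup>+x. f x \<partial>M) t * ep (\<integral>\<^sup>+x. g x \<partial>M) (1 - t)"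
proof -
  consider "t = 0" | "t = 1" | "0 < t \<and> t < 1" using t by linarith
  then show ?thesis
  proof cases
    case 1 then show ?thesis by simp
  next
    case 2 then show ?thesis by simp
  next
    case 3
    then have t0: "0 < t" "t < 1" by auto
    define A where "A = (\<integral>\<^sup>+x. f x \<partial>M)"
    define B where "B = (\<integral>\<^sup>+x. g x \<partial>M)"
    show ?thesis
    proof (cases "A = 0 \<or> B = 0")
      case True
      then have "AE x in M. ep (f x) t * ep (g x) (1 - t) = 0"
      proof
        assume "A = 0"
        then have "AE x in M. f x = 0" unfolding A_def by (simp add: nn_integral_0_iff_AE)
        then show ?thesis by eventually_elim (use t0 in simp)
      next
        assume "B = 0"
        then have "AE x in M. g x = 0" unfolding B_def by (simp add: nn_integral_0_iff_AE)
        then show ?thesis by eventually_elim (use t0 in simp)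
      qed
      then have "(\<integral>\<^sup>+x. ep (f x) t * ep (g x) (1 - t) \<partial>M) = 0"
        by (simp add: nn_integral_0_iff_AE)
      then show ?thesis by simp
    next
      case nz: False
      show ?thesis
      proof (cases "A = top \<or> B = top")
        case True
        moreover have "t \<noteq> 0" "1 - t \<noteq> 0" using t0 by auto
        ultimately have "ep A t * ep B (1 - t) = top" using nz
          by (auto simp: ep_eq_0_iff ennreal_mult_eq_top_iff ep_eq_top_iff)
        then show ?thesis unfolding A_def B_def by simp
      next
        case False
        define cA cB where "cA = ep A t" and "cB = ep B (1 - t)"
        have iA: "inverse A * A = 1" "A * inverse A = 1"
          using nz False ennreal_divide_self[of A]
          by (auto simp: divide_ennreal_def top.not_eq_extremum mult.commute)
        have iB: "inverse B * B = 1" "B * inverse B = 1"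
          using nz False ennreal_divide_self[of B]
          by (auto simp: divide_ennreal_def top.not_eq_extremum mult.commute)
        have pf: "ep (f x) t = cA * ep (f x * inverse A) t" for x
        proof -
          have "cA * ep (f x * inverse A) t = ep (A * (f x * inverse A)) t"
            unfolding cA_def using t0 by (simp add: ep_mult)
          also have "A * (f x * inverse A) = f x" using iA(2) by (metis mult.assoc mult.commute mult_1)
          finally show ?thesis by simp
        qed
        have pg: "ep (g x) (1 - t) = cB * ep (g x * inverse B) (1 - t)" for x
        proof -
          have "cB * ep (g x * inverse B) (1 - t) = ep (B * (g x * inverse B)) (1 - t)"
            unfolding cB_def using t0 by (simp add: ep_mult)
          also have "B * (g x * inverse B) = g x" using iB(2) by (metis mult.assoc mult.commute mult_1)
          finally show ?thesis by simp
        qed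
        have "(\<integral>\<^sup>+x. ep (f x) t * ep (g x) (1 - t) \<partial>M)
            = (\<integral>\<^sup>+x. (cA * cB) * (ep (f x * inverse A) t * ep (g x * inverse B) (1 - t)) \<partial>M)"
          by (simp add: pf pg mult_ac)
        also have "\<dots> = (cA * cB) * (\<integral>\<^sup>+x. ep (f x * inverse A) t * ep (g x * inverse B) (1 - t) \<partial>M)"
          by (simp add: nn_integral_cmult)
        also have "\<dots> \<le> (cA * cB) * (\<integral>\<^sup>+x. ennreal t * (f x * inverse A) + ennreal (1 - t) * (g x * inverse B) \<partial>M)"
          by (intro mult_left_mono nn_integral_mono amgm_enn t0) simp
        also have "(\<integral>\<^sup>+x. ennreal t * (f x * inverse A) + ennreal (1 - t) * (g x * inverse B) \<partial>M)
            = ennreal t * (A * inverse A) + ennreal (1 - t) * (B * inverse B)"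
          by (simp add: nn_integral_add nn_integral_cmult nn_integral_multc A_def B_def)
        also have "\<dots> = 1" using iA iB t0 by (simp flip: ennreal_plus)
        finally show ?thesis by (simp add: cA_def cB_def A_def B_def)
      qed
    qed
  qed
qed




lemma holder3:
  assumes [measurable]: "f \<in> borel_measurable M" "g \<in> borel_measurable M" "h \<in> borel_measurable M"
    and w: "0 \<le> a" "0 \<le> b" "0 \<le> c" "a + b + c = 1"
  shows "(\<integral>\<^sup>+x. ep (f x) a * ep (g x) b * ep (h x) c \<partial>M)
          \<le> ep (\<integral>\<^sup>+x. f x \<partial>M) a * ep (\<integral>\<^sup>+x. g x \<partial>M) b * ep (\<integral>\<^sup>+x. h x \<partial>M) c"
proof (cases "a = 1")
  case True
  then have "b = 0" "c = 0" using w by auto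
  then show ?thesis using True by simp
next
  case False
  define s where "s = 1 - a"
  have s: "0 < s" using w False by (simp add: s_def)
  define k where "k x = ep (g x) (b / s) * ep (h x) (c / s)" for x
  have [measurable]: "k \<in> borel_measurable M" unfolding k_def by measurable
  have bs: "c / s = 1 - b / s" using s w by (simp add: s_def field_simps)
  have ks: "ep (k x) s = ep (g x) b * ep (h x) c" for x
    unfolding k_def using s w by (simp add: ep_mult ep_ep)
  have "(\<integral>\<^sup>+x. ep (f x) a * ep (g x) b * ep (h x) c \<partial>M) = (\<integral>\<^sup>+x. ep (f x) a * ep (k x) (1 - a) \<partial>M)"
    by (simp add: ks[unfolded s_def] mult.assoc)
  also have "\<dots> \<le> ep (\<integral>\<^sup>+x. f x \<partial>M) a * ep (\<integral>\<^sup>+x. k x \<partial>M) (1 - a)"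
    using w by (intro holder2) auto
  also have "ep (\<integral>\<^sup>+x. k x \<partial>M) (1 - a) \<le> ep (ep (\<integral>\<^sup>+x. g x \<partial>M) (b / s) * ep (\<integral>\<^sup>+x. h x \<partial>M) (c / s)) (1 - a)"
  proof (intro ep_mono)
    show "(\<integral>\<^sup>+x. k x \<partial>M) \<le> ep (\<integral>\<^sup>+x. g x \<partial>M) (b / s) * ep (\<integral>\<^sup>+x. h x \<partial>M) (c / s)"
      unfolding k_def bs using s w by (intro holder2) (auto simp: s_def field_simps)
  qed (use s s_def in auto)
  also have "ep (ep (\<integral>\<^sup>+x. g x \<partial>M) (b / s) * ep (\<integral>\<^sup>+x. h x \<partial>M) (c / s)) (1 - a)
      = ep (\<integral>\<^sup>+x. g x \<partial>M) b * ep (\<integral>\<^sup>+x. h x \<partial>M) c"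
    using s w by (simp add: ep_mult ep_ep s_def[symmetric])
  finally show ?thesis by (simp add: mult_left_mono mult.assoc)
qed

lemma nn_integral_translate:
  fixes g :: "'a::euclidean_space \<Rightarrow> ennreal"
  assumes [measurable]: "g \<in> borel_measurable borel"
  shows "(\<integral>\<^sup>+y. g (x - y) \<partial>lborel) = (\<integral>\<^sup>+y. g y \<partial>lborel)"
proof -
  have "(\<integral>\<^sup>+y. g y \<partial>lborel) = (\<integral>\<^sup>+y. g y \<partial>(density (distr lborel borel (\<lambda>y. x + (-1) *\<^sub>R y)) (\<lambda>_. \<bar>-1::real\<bar>^DIM('a))))"
    by (subst lborel_affine[of "-1" x]) auto
  also have "\<dots> = (\<integral>\<^sup>+y. g (x - y) \<partial>lborel)"
    by (simp add: nn_integral_density nn_integral_distr)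
  finally show ?thesis ..
qed

lemma young:
  fixes K f :: "'a::euclidean_space \<Rightarrow> ennreal"
  assumes [measurable]: "K \<in> borel_measurable borel" "f \<in> borel_measurable borel"
    and a: "1 \<le> a" and m: "1 \<le> m" and r: "0 < r" and e: "1 / a + 1 / m = 1 + 1 / r"
  shows "(\<integral>\<^sup>+x. ep (\<integral>\<^sup>+y. K (x - y) * f y \<partial>lborel) r \<partial>lborel)
          \<le> ep (\<integral>\<^sup>+z. ep (K z) a \<partial>lborel) (r / a) * ep (\<integral>\<^sup>+y. ep (f y) m \<partial>lborel) (r / m)"
proof -
  define \<alpha> \<beta> \<gamma> where "\<alpha> = 1 / r" and "\<beta> = 1 - 1 / m" and "\<gamma> = 1 - 1 / a"
  have w: "0 \<le> \<alpha>" "0 \<le> \<beta>" "0 \<le> \<gamma>" "\<alpha> + \<beta> + \<gamma> = 1"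
    using a m r e by (auto simp: \<alpha>_def \<beta>_def \<gamma>_def field_simps)
  define A where "A = (\<integral>\<^sup>+z. ep (K z) a \<partial>lborel)"
  define F where "F = (\<integral>\<^sup>+y. ep (f y) m \<partial>lborel)"
  have pw: "K z * f y = ep (ep (K z) a * ep (f y) m) \<alpha> * ep (ep (K z) a) \<beta> * ep (ep (f y) m) \<gamma>" for z y
  proof -
    have "ep (ep (K z) a * ep (f y) m) \<alpha> * ep (ep (K z) a) \<beta> * ep (ep (f y) m) \<gamma>
        = (ep (K z) (a * \<alpha>) * ep (K z) (a * \<beta>)) * (ep (f y) (m * \<alpha>) * ep (f y) (m * \<gamma>))"
      using w a m by (simp add: ep_mult ep_ep mult_ac)
    also have "\<dots> = ep (K z) (a * \<alpha> + a * \<beta>) * ep (f y) (m * \<alpha> + m * \<gamma>)"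
      using w a m by (simp add: ep_add)
    finally have eq: "ep (ep (K z) a * ep (f y) m) \<alpha> * ep (ep (K z) a) \<beta> * ep (ep (f y) m) \<gamma>
        = ep (K z) (a * \<alpha> + a * \<beta>) * ep (f y) (m * \<alpha> + m * \<gamma>)" .
    have "a * \<alpha> + a * \<beta> = 1" "m * \<alpha> + m * \<gamma> = 1"
      using a m r e by (auto simp: \<alpha>_def \<beta>_def \<gamma>_def field_simps)
    with eq show ?thesis by simp
  qed
  have inner: "ep (\<integral>\<^sup>+y. K (x - y) * f y \<partial>lborel) r
      \<le> (\<integral>\<^sup>+y. ep (K (x - y)) a * ep (f y) m \<partial>lborel) * (ep A (r * \<beta>) * ep F (r * \<gamma>))" for x
  proof -
    have "(\<integral>\<^sup>+y. K (x - y) * f y \<partial>lborel)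
        \<le> ep (\<integral>\<^sup>+y. ep (K (x - y)) a * ep (f y) m \<partial>lborel) \<alpha> * ep (\<integral>\<^sup>+y. ep (K (x - y)) a \<partial>lborel) \<beta>
           * ep (\<integral>\<^sup>+y. ep (f y) m \<partial>lborel) \<gamma>"
      unfolding pw by (rule holder3) (use w in auto)
    also have "(\<integral>\<^sup>+y. ep (K (x - y)) a \<partial>lborel) = A"
      unfolding A_def by (rule nn_integral_translate) measurable
    finally have "ep (\<integral>\<^sup>+y. K (x - y) * f y \<partial>lborel) r \<le>
        ep (ep (\<integral>\<^sup>+y. ep (K (x - y)) a * ep (f y) m \<partial>lborel) \<alpha> * ep A \<beta> * ep F \<gamma>) r"
      unfolding F_def using r by (intro ep_mono) auto
    also have "\<dots> = (\<integral>\<^sup>+y. ep (K (x - y)) a * ep (f y) m \<partial>lborel) * (ep A (r * \<beta>) * ep F (r * \<gamma>))"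
      using w r by (simp add: ep_mult ep_ep \<alpha>_def mult_ac)
    finally show ?thesis .
  qed
  have "(\<integral>\<^sup>+x. ep (\<integral>\<^sup>+y. K (x - y) * f y \<partial>lborel) r \<partial>lborel)
      \<le> (\<integral>\<^sup>+x. (\<integral>\<^sup>+y. ep (K (x - y)) a * ep (f y) m \<partial>lborel) * (ep A (r * \<beta>) * ep F (r * \<gamma>)) \<partial>lborel)"
    by (intro nn_integral_mono inner)
  also have "\<dots> = (\<integral>\<^sup>+x. (\<integral>\<^sup>+y. ep (K (x - y)) a * ep (f y) m \<partial>lborel) \<partial>lborel) * (ep A (r * \<beta>) * ep F (r * \<gamma>))"
    by (rule nn_integral_multc) measurable
  also have "(\<integral>\<^sup>+x. (\<integral>\<^sup>+y. ep (K (x - y)) a * ep (f y) m \<partial>lborel) \<partial>lborel)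
      = (\<integral>\<^sup>+y. (\<integral>\<^sup>+x. ep (K (x - y)) a * ep (f y) m \<partial>lborel) \<partial>lborel)"
    by (rule lborel_pair.Fubini'[symmetric]) measurable
  also have "\<dots> = (\<integral>\<^sup>+y. (\<integral>\<^sup>+x. ep (K (x - y)) a \<partial>lborel) * ep (f y) m \<partial>lborel)"
    by (intro nn_integral_cong nn_integral_multc) measurable
  also have "\<dots> = (\<integral>\<^sup>+y. A * ep (f y) m \<partial>lborel)"
  proof (intro nn_integral_cong arg_cong2[where f="(*)"] refl)
    fix y :: 'a
    have "(\<integral>\<^sup>+x. ep (K (x - y)) a \<partial>lborel) = (\<integral>\<^sup>+x. ep (K (y - x)) a \<partial>lborel)"
    proof -
      have "(\<integral>\<^sup>+x. ep (K (x - y)) a \<partial>lborel) = (\<integral>\<^sup>+x. ep (K (-(y - x))) a \<partial>lborel)" by simp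
      also have "\<dots> = (\<integral>\<^sup>+x. ep (K (- x)) a \<partial>lborel)"
        by (rule nn_integral_translate[of "\<lambda>x. ep (K (- x)) a" y]) measurable
      also have "\<dots> = (\<integral>\<^sup>+x. ep (K x) a \<partial>lborel)"
        using nn_integral_translate[of "\<lambda>x. ep (K x) a" 0] by simp
      also have "\<dots> = (\<integral>\<^sup>+x. ep (K (y - x)) a \<partial>lborel)"
        by (rule nn_integral_translate[symmetric]) measurable
      finally show ?thesis .
    qed
    also have "\<dots> = A" unfolding A_def by (rule nn_integral_translate) measurable
    finally show "(\<integral>\<^sup>+x. ep (K (x - y)) a \<partial>lborel) = A" .
  qed
  also have "\<dots> = A * F" unfolding F_def by (rule nn_integral_cmult) measurable
  also have "A * F * (ep A (r * \<beta>) * ep F (r * \<gamma>)) = (ep A 1 * ep A (r * \<beta>)) * (ep F 1 * ep F (r * \<gamma>))"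
    by (simp add: mult_ac)
  also have "\<dots> = ep A (r / a) * ep F (r / m)"
  proof -
    have "1 + r * \<beta> = r / a" "1 + r * \<gamma> = r / m"
      using a m r e by (auto simp: \<beta>_def \<gamma>_def field_simps)
    moreover have "ep A 1 * ep A (r * \<beta>) = ep A (1 + r * \<beta>)" "ep F 1 * ep F (r * \<gamma>) = ep F (1 + r * \<gamma>)"
      using w r by (simp_all add: ep_add del: ep_1)
    ultimately show ?thesis by simp
  qed
  finally show ?thesis unfolding A_def F_def .
qed




lemma tmink:
  fixes F :: "real \<Rightarrow> ennreal" and w :: "real \<Rightarrow> real"
  assumes [measurable]: "F \<in> borel_measurable borel" "w \<in> borel_measurable borel" "I \<in> sets borel"
    and wpos: "\<And>s. s \<in> I \<Longrightarrow> 0 < w s" and r: "1 \<le> r"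
  shows "ep (\<integral>\<^sup>+s. F s * indicator I s \<partial>lborel) r
     \<le> ep (\<integral>\<^sup>+s. ennreal (w s) * indicator I s \<partial>lborel) (r - 1) *
        (\<integral>\<^sup>+s. ep (F s) r * ennreal (w s powr (1 - r)) * indicator I s \<partial>lborel)"
proof -
  define \<theta> where "\<theta> = 1 / r"
  have th: "0 < \<theta>" "\<theta> \<le> 1" "\<theta> * r = 1" "(1 - \<theta>) * r = r - 1" using r
    by (auto simp: \<theta>_def field_simps)
  define \<phi> where "\<phi> s = ep (F s) r * ennreal (w s powr (1 - r)) * indicator I s" for s
  define \<psi> where "\<psi> s = ennreal (w s) * indicator I s" for s
  have [measurable]: "\<phi> \<in> borel_measurable borel" "\<psi> \<in> borel_measurable borel"
    unfolding \<phi>_def \<psi>_def by measurable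
  have pw: "F s * indicator I s = ep (\<phi> s) \<theta> * ep (\<psi> s) (1 - \<theta>)" for s
  proof (cases "s \<in> I")
    case False
    then show ?thesis using th by (simp add: \<phi>_def \<psi>_def)
  next
    case True
    have ws: "0 < w s" using wpos True by auto
    have "ep (\<phi> s) \<theta> * ep (\<psi> s) (1 - \<theta>)
       = ep (ep (F s) r) \<theta> * (ep (ennreal (w s powr (1 - r))) \<theta> * ep (ennreal (w s)) (1 - \<theta>))"
      using True th by (simp add: \<phi>_def \<psi>_def ep_mult mult_ac)
    also have "ep (ennreal (w s powr (1 - r))) \<theta> * ep (ennreal (w s)) (1 - \<theta>) = 1"
    proof (cases "\<theta> = 1")
      case True
      then have "r = 1" using th by simp
      then show ?thesis using True ws by (simp add: ep_ennreal)
    next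
      case False
      have "ep (ennreal (w s powr (1 - r))) \<theta> * ep (ennreal (w s)) (1 - \<theta>)
          = ennreal ((w s powr (1 - r)) powr \<theta> * w s powr (1 - \<theta>))"
        using False th ws by (simp add: ep_ennreal ennreal_mult)
      also have "(w s powr (1 - r)) powr \<theta> * w s powr (1 - \<theta>) = w s powr ((1 - r) * \<theta> + (1 - \<theta>))"
        using ws by (simp add: powr_powr powr_add)
      also have "(1 - r) * \<theta> + (1 - \<theta>) = 0" using r by (simp add: \<theta>_def field_simps)
      finally show ?thesis using ws by simp
    qed
    moreover have "r * \<theta> = 1" using th by (simp add: mult.commute)
    ultimately show ?thesis using True th r by (simp add: ep_ep)
  qed
  have "ep (\<integral>\<^sup>+s. F s * indicator I s \<partial>lborel) r \<le>
        ep (ep (\<integral>\<^sup>+s. \<phi> s \<partial>lborel) \<theta> * ep (\<integral>\<^sup>+s. \<psi> s \<partial>lborel) (1 - \<theta>)) r"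
    unfolding pw using th r by (intro ep_mono holder2) auto
  also have "\<dots> = (\<integral>\<^sup>+s. \<phi> s \<partial>lborel) * ep (\<integral>\<^sup>+s. \<psi> s \<partial>lborel) (r - 1)"
    using th r by (simp add: ep_mult ep_ep)
  finally show ?thesis by (simp add: \<phi>_def \<psi>_def mult.commute)
qed




lemma styoung:
  fixes K g :: "real \<Rightarrow> 'a::euclidean_space \<Rightarrow> ennreal" and k G :: "real \<Rightarrow> real"
  assumes Km[measurable]: "case_prod K \<in> borel_measurable (lborel \<Otimes>\<^sub>M lborel)"
    and gm[measurable]: "case_prod g \<in> borel_measurable (lborel \<Otimes>\<^sub>M lborel)"
    and [measurable]: "k \<in> borel_measurable borel" "G \<in> borel_measurable borel" "I \<in> sets borel"
    and a: "1 \<le> a" and m: "1 \<le> m" and r: "1 \<le> r" and e: "1 / a + 1 / m = 1 + 1 / r"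
    and kpos: "\<And>s. s \<in> I \<Longrightarrow> 0 < k s" and Gpos: "\<And>s. s \<in> I \<Longrightarrow> 0 < G s"
    and kb: "\<And>s. s \<in> I \<Longrightarrow> ep (\<integral>\<^sup>+z. ep (K s z) a \<partial>lborel) (1 / a) \<le> ennreal (k s)"
    and gb: "AE s in lborel. s \<in> I \<longrightarrow> ep (\<integral>\<^sup>+y. ep (g s y) m \<partial>lborel) (1 / m) \<le> ennreal (G s)"
  shows "(\<integral>\<^sup>+x. ep (\<integral>\<^sup>+s. (\<integral>\<^sup>+y. K s (x - y) * g s y \<partial>lborel) * indicator I s \<partial>lborel) r \<partial>lborel)
      \<le> ep (\<integral>\<^sup>+s. ennreal (k s * G s) * indicator I s \<partial>lborel) r"
proof -
  define w where "w s = k s * G s" for s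
  have [measurable]: "w \<in> borel_measurable borel" unfolding w_def by measurable
  have wpos: "s \<in> I \<Longrightarrow> 0 < w s" for s using kpos Gpos by (simp add: w_def)
  define W where "W = (\<integral>\<^sup>+s. ennreal (w s) * indicator I s \<partial>lborel)"
  define Fx where "Fx x s = (\<integral>\<^sup>+y. K s (x - y) * g s y \<partial>lborel)" for x s
  have Fxm[measurable]: "case_prod Fx \<in> borel_measurable (lborel \<Otimes>\<^sub>M lborel)"
    unfolding Fx_def by measurable
  have Fxm1[measurable]: "Fx x \<in> borel_measurable borel" for x
    unfolding Fx_def by measurable
  have "(\<integral>\<^sup>+x. ep (\<integral>\<^sup>+s. Fx x s * indicator I s \<partial>lborel) r \<partial>lborel)
      \<le> (\<integral>\<^sup>+x. ep W (r - 1) * (\<integral>\<^sup>+s. ep (Fx x s) r * ennreal (w s powr (1 - r)) * indicator I s \<partial>lborel) \<partial>lborel)"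
    unfolding W_def by (intro nn_integral_mono tmink wpos r) measurable
  also have "\<dots> = ep W (r - 1) * (\<integral>\<^sup>+x. (\<integral>\<^sup>+s. ep (Fx x s) r * ennreal (w s powr (1 - r)) * indicator I s \<partial>lborel) \<partial>lborel)"
    by (rule nn_integral_cmult) measurable
  also have "(\<integral>\<^sup>+x. (\<integral>\<^sup>+s. ep (Fx x s) r * ennreal (w s powr (1 - r)) * indicator I s \<partial>lborel) \<partial>lborel)
     = (\<integral>\<^sup>+s. (\<integral>\<^sup>+x. ep (Fx x s) r * ennreal (w s powr (1 - r)) * indicator I s \<partial>lborel) \<partial>lborel)"
    by (rule lborel_pair.Fubini') measurable
  finally have step1: "(\<integral>\<^sup>+x. ep (\<integral>\<^sup>+s. Fx x s * indicator I s \<partial>lborel) r \<partial>lborel)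
    \<le> ep W (r - 1) * (\<integral>\<^sup>+s. (\<integral>\<^sup>+x. ep (Fx x s) r * ennreal (w s powr (1 - r)) * indicator I s \<partial>lborel) \<partial>lborel)" .
  have step2: "(\<integral>\<^sup>+s. (\<integral>\<^sup>+x. ep (Fx x s) r * ennreal (w s powr (1 - r)) * indicator I s \<partial>lborel) \<partial>lborel) \<le> W"
    unfolding W_def
  proof (rule nn_integral_mono_AE)
    show "AE s in lborel. (\<integral>\<^sup>+x. ep (Fx x s) r * ennreal (w s powr (1 - r)) * indicator I s \<partial>lborel)
        \<le> ennreal (w s) * indicator I s"
      using gb
    proof eventually_elim
      case (elim s)
      show ?case
      proof (cases "s \<in> I")
        case False then show ?thesis by simp
      next
        case True
        have Ks[measurable]: "K s \<in> borel_measurable borel" by measurable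
        have gs[measurable]: "g s \<in> borel_measurable borel" by measurable
        have "(\<integral>\<^sup>+x. ep (Fx x s) r \<partial>lborel) \<le>
            ep (\<integral>\<^sup>+z. ep (K s z) a \<partial>lborel) (r / a) * ep (\<integral>\<^sup>+y. ep (g s y) m \<partial>lborel) (r / m)"
          unfolding Fx_def using a m r e by (intro young) auto
        also have "\<dots> = ep (ep (\<integral>\<^sup>+z. ep (K s z) a \<partial>lborel) (1 / a)) r * ep (ep (\<integral>\<^sup>+y. ep (g s y) m \<partial>lborel) (1 / m)) r"
          using a m r by (simp add: ep_ep)
        also have "\<dots> \<le> ep (ennreal (k s)) r * ep (ennreal (G s)) r"
          using kb[OF True] elim True r by (intro mult_mono ep_mono) auto
        also have "\<dots> = ennreal (w s powr r)"
          using kpos[OF True] Gpos[OF True] r by (simp add: ep_ennreal w_def powr_mult ennreal_mult)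
        finally have 1: "(\<integral>\<^sup>+x. ep (Fx x s) r \<partial>lborel) \<le> ennreal (w s powr r)" .
        have "(\<integral>\<^sup>+x. ep (Fx x s) r * ennreal (w s powr (1 - r)) * indicator I s \<partial>lborel)
            = (\<integral>\<^sup>+x. ep (Fx x s) r \<partial>lborel) * ennreal (w s powr (1 - r))"
          using True by (simp add: nn_integral_multc)
        also have "\<dots> \<le> ennreal (w s powr r) * ennreal (w s powr (1 - r))"
          using 1 by (rule mult_right_mono) simp
        also have "\<dots> = ennreal (w s)"
          using wpos[OF True] by (simp add: ennreal_mult[symmetric] powr_add[symmetric])
        finally show ?thesis using True by simp
      qed
    qed
  qed
  have "ep W (r - 1) * W = ep W r"
    using r ep_add[of "r - 1" 1 W] by simp
  with step1 step2 have "(\<integral>\<^sup>+x. ep (\<integral>\<^sup>+s. Fx x s * indicator I s \<partial>lborel) r \<partial>lborel) \<le> ep W r"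
    by (metis (no_types, lifting) mult_left_mono order_trans zero_le)
  then show ?thesis unfolding Fx_def W_def w_def .
qed




lemma heat_kernel_nonneg: "0 \<le> heat_kernel t x"
  by (simp add: heat_kernel_def)

lemma measurable_grad_heat_kernel'[measurable (raw)]:
  assumes [measurable]: "f \<in> borel_measurable M" "g \<in> borel_measurable M"
  shows "(\<lambda>x. grad_heat_kernel (f x) (g x) :: real^'d) \<in> borel_measurable M"
  unfolding grad_heat_kernel_def heat_kernel_def by measurable

lemma norm_grad_heat_kernel:
  assumes "0 < r"
  shows "norm (grad_heat_kernel r x) = heat_kernel r x * norm x / (2 * r)"
  using assms heat_kernel_nonneg[of r x]
  by (simp add: grad_heat_kernel_def abs_mult)




lemma grad_scale:
  fixes y :: "real^'d"
  assumes r: "0 < r"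
  shows "norm (grad_heat_kernel r (sqrt r *\<^sub>R y))
       = r powr (- (real CARD('d) + 1) / 2) * norm (grad_heat_kernel 1 y)"
proof -
  define n where "n = real CARD('d)"
  have nr: "(norm (sqrt r *\<^sub>R y))\<^sup>2 = r * (norm y)\<^sup>2" using r
    by (simp add: power_mult_distrib)
  have hk: "heat_kernel r (sqrt r *\<^sub>R y) = r powr (- n / 2) * heat_kernel 1 y"
    unfolding heat_kernel_def n_def[symmetric] nr using r
    by (simp add: powr_mult)
  have "norm (grad_heat_kernel r (sqrt r *\<^sub>R y)) = r powr (- n / 2) * heat_kernel 1 y * (sqrt r * norm y) / (2 * r)"
    using r by (simp add: norm_grad_heat_kernel hk)
  also have "\<dots> = (r powr (- n / 2) * sqrt r / r) * (heat_kernel 1 y * norm y / 2)"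
    using r by (simp add: field_simps)
  also have "r powr (- n / 2) * sqrt r / r = r powr (- (n + 1) / 2)"
  proof -
    have s1: "sqrt r = r powr (1/2)" using r by (simp add: powr_half_sqrt)
    have s2: "r powr (-1) = 1 / r" using r by (simp add: powr_neg_one)
    have "r powr (- n / 2) * sqrt r / r = r powr (- n / 2) * r powr (1/2) * r powr (-1)"
      unfolding s1 s2 by simp
    also have "\<dots> = r powr (- n / 2 + 1/2 + (-1))" by (simp only: powr_add[symmetric])
    also have "- n / 2 + 1/2 + (-1) = - (n + 1) / 2" by (simp add: field_simps)
    finally show ?thesis .
  qed
  finally show ?thesis by (simp add: norm_grad_heat_kernel n_def)
qed

lemma kernel_scaling:
  assumes a: "0 < a" and r: "0 < r"
  shows "(\<integral>\<^sup>+z. ep (ennreal (norm (grad_heat_kernel r (z::real^'d)))) a \<partial>lborel)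
     = ennreal (r powr (real CARD('d) / 2 - a * (real CARD('d) + 1) / 2)) *
       (\<integral>\<^sup>+y. ep (ennreal (norm (grad_heat_kernel 1 (y::real^'d)))) a \<partial>lborel)"
proof -
  define n where "n = real CARD('d)"
  define f where "f z = ep (ennreal (norm (grad_heat_kernel r (z::real^'d)))) a" for z
  have [measurable]: "f \<in> borel_measurable borel" unfolding f_def by measurable
  have sr: "sqrt r \<noteq> 0" using r by simp
  have "(\<integral>\<^sup>+z. f z \<partial>lborel) = (\<integral>\<^sup>+z. f z \<partial>(density (distr lborel borel (\<lambda>y. 0 + sqrt r *\<^sub>R y)) (\<lambda>_. \<bar>sqrt r\<bar>^DIM(real^'d))))"
    by (subst lborel_affine[OF sr, of 0]) rule
  also have "\<dots> = (\<integral>\<^sup>+y. ennreal (sqrt r ^ CARD('d)) * f (sqrt r *\<^sub>R y) \<partial>lborel)"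
    using r by (simp add: nn_integral_density nn_integral_distr)
  also have "\<dots> = (\<integral>\<^sup>+y. ennreal (r powr (n / 2 - a * (n + 1) / 2)) * ep (ennreal (norm (grad_heat_kernel 1 (y::real^'d)))) a \<partial>lborel)"
  proof (intro nn_integral_cong)
    fix y :: "real^'d"
    have "f (sqrt r *\<^sub>R y) = ep (ennreal (r powr (- (n + 1) / 2))) a * ep (ennreal (norm (grad_heat_kernel 1 y))) a"
      unfolding f_def grad_scale[OF r] n_def using a by (simp add: ennreal_mult ep_mult)
    also have "\<dots> = ennreal (r powr (- (n + 1) / 2 * a)) * ep (ennreal (norm (grad_heat_kernel 1 y))) a"
      using a by (simp add: ep_ennreal powr_powr)
    finally have 1: "f (sqrt r *\<^sub>R y) = ennreal (r powr (- (n + 1) / 2 * a)) * ep (ennreal (norm (grad_heat_kernel 1 y))) a" .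
    have 2: "sqrt r ^ CARD('d) = r powr (n / 2)"
    proof -
      have "sqrt r ^ CARD('d) = (r powr (1/2)) ^ CARD('d)" using r by (simp add: powr_half_sqrt)
      also have "\<dots> = (r powr (1/2)) powr (real CARD('d))" using r by (simp add: powr_realpow)
      also have "\<dots> = r powr (n / 2)" by (simp add: powr_powr n_def)
      finally show ?thesis .
    qed
    have 3: "r powr (n / 2) * r powr (- (n + 1) / 2 * a) = r powr (n / 2 - a * (n + 1) / 2)"
      by (simp add: powr_add[symmetric] field_simps)
    show "ennreal (sqrt r ^ CARD('d)) * f (sqrt r *\<^sub>R y) = ennreal (r powr (n / 2 - a * (n + 1) / 2)) * ep (ennreal (norm (grad_heat_kernel 1 y))) a"
      unfolding 1 2 using r by (simp add: 3[symmetric] ennreal_mult mult.assoc)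
  qed
  also have "\<dots> = ennreal (r powr (n / 2 - a * (n + 1) / 2)) * (\<integral>\<^sup>+y. ep (ennreal (norm (grad_heat_kernel 1 (y::real^'d)))) a \<partial>lborel)"
    by (rule nn_integral_cmult) measurable
  finally show ?thesis unfolding f_def n_def .
qed




lemma gauss1_finite:
  assumes b: "0 < b"
  shows "(\<integral>\<^sup>+t. ennreal (exp (- b * t\<^sup>2)) \<partial>lborel) < \<infinity>"
proof -
  define \<sigma> where "\<sigma> = sqrt (1 / (2 * b))"
  have s2: "2 * \<sigma>\<^sup>2 = 1 / b" using b by (simp add: \<sigma>_def)
  define c where "c = sqrt (2 * pi * \<sigma>\<^sup>2)"
  have eq: "exp (- b * t\<^sup>2) = c * normal_density 0 \<sigma> t" for t
  proof -
    have "c > 0" using b by (simp add: c_def \<sigma>_def)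
    moreover have "- (t - 0)\<^sup>2 / (2 * \<sigma>\<^sup>2) = - b * t\<^sup>2" unfolding s2 using b by (simp add: field_simps)
    ultimately show ?thesis by (simp add: normal_density_def c_def[symmetric])
  qed
  have "(\<integral>\<^sup>+t. ennreal (normal_density 0 \<sigma> t) \<partial>lborel) < \<infinity>"
  proof -
    have "integrable lborel (normal_density 0 \<sigma>)" by (rule integrable_normal_density) (use b in \<open>simp add: \<sigma>_def\<close>)
    then have "(\<integral>\<^sup>+t. ennreal (norm (normal_density 0 \<sigma> t)) \<partial>lborel) < \<infinity>"
      unfolding integrable_iff_bounded by simp
    then show ?thesis by simp
  qed
  then have "ennreal c * (\<integral>\<^sup>+t. ennreal (normal_density 0 \<sigma> t) \<partial>lborel) < \<infinity>"
    by (simp add: ennreal_mult_less_top)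
  also have "ennreal c * (\<integral>\<^sup>+t. ennreal (normal_density 0 \<sigma> t) \<partial>lborel) = (\<integral>\<^sup>+t. ennreal (exp (- b * t\<^sup>2)) \<partial>lborel)"
  proof -
    have "c \<ge> 0" by (simp add: c_def)
    then have "\<And>t. ennreal (exp (- b * t\<^sup>2)) = ennreal c * ennreal (normal_density 0 \<sigma> t)"
      by (subst eq) (simp add: ennreal_mult)
    then show ?thesis by (simp add: nn_integral_cmult)
  qed
  finally show ?thesis .
qed

lemma gauss_finite:
  assumes b: "0 < b"
  shows "(\<integral>\<^sup>+y. ennreal (exp (- b * (norm (y::'a::euclidean_space))\<^sup>2)) \<partial>lborel) < \<infinity>"
proof -
  have "(\<integral>\<^sup>+y. ennreal (exp (- b * (norm (y::'a))\<^sup>2)) \<partial>lborel)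
      = (\<integral>\<^sup>+y. (\<Prod>i\<in>Basis. (\<lambda>i t. ennreal (exp (- b * t\<^sup>2))) i ((y::'a) \<bullet> i)) \<partial>lborel)"
  proof (intro nn_integral_cong)
    fix y :: 'a
    have "(norm y)\<^sup>2 = (\<Sum>i\<in>Basis. (y \<bullet> i)\<^sup>2)"
      by (metis (no_types, lifting) euclidean_inner power2_eq_square power2_norm_eq_inner sum.cong)
    then have "exp (- b * (norm y)\<^sup>2) = (\<Prod>i\<in>Basis. exp (- b * (y \<bullet> i)\<^sup>2))"
      by (simp add: sum_distrib_left exp_sum)
    then show "ennreal (exp (- b * (norm y)\<^sup>2)) = (\<Prod>i\<in>Basis. (\<lambda>i t. ennreal (exp (- b * t\<^sup>2))) i (y \<bullet> i))"
      by (simp add: prod_ennreal)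
  qed
  also have "\<dots> = (\<Prod>i\<in>(Basis::'a set). (\<integral>\<^sup>+t. ennreal (exp (- b * t\<^sup>2)) \<partial>lborel))"
    by (rule nn_integral_lborel_prod) auto
  also have "\<dots> = (\<integral>\<^sup>+t. ennreal (exp (- b * t\<^sup>2)) \<partial>lborel) ^ DIM('a)"
    by simp
  also have "\<dots> < \<infinity>" using gauss1_finite[OF b] by (simp add: power_less_top_ennreal)
  finally show ?thesis .
qed

lemma aux_exp_bound: "(u::real) \<le> 2 * exp (u\<^sup>2 / 8)"
proof -
  have "1 + u\<^sup>2 / 8 \<le> exp (u\<^sup>2 / 8)" by (rule exp_ge_add_one_self)
  moreover have "u \<le> 2 * (1 + u\<^sup>2 / 8)"
    using sum_squares_ge_zero[of "u - 2" 0] by (simp add: power2_eq_square algebra_simps)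
  ultimately show ?thesis by (smt (verit))
qed

lemma grad1_bound:
  "norm (grad_heat_kernel 1 (y::real^'d)) \<le> (4 * pi) powr (- real CARD('d) / 2) * exp (- (norm y)\<^sup>2 / 8)"
proof -
  have "norm (grad_heat_kernel 1 y) = (4 * pi) powr (- real CARD('d) / 2) * (exp (- (norm y)\<^sup>2 / 4) * norm y / 2)"
    by (simp add: norm_grad_heat_kernel heat_kernel_def)
  also have "exp (- (norm y)\<^sup>2 / 4) * norm y / 2 \<le> exp (- (norm y)\<^sup>2 / 8)"
  proof -
    have "exp (- (norm y)\<^sup>2 / 4) * norm y \<le> exp (- (norm y)\<^sup>2 / 4) * (2 * exp ((norm y)\<^sup>2 / 8))"
      by (intro mult_left_mono aux_exp_bound) simp
    also have "\<dots> = 2 * exp (- (norm y)\<^sup>2 / 8)"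
      by (simp add: exp_add[symmetric])
    finally show ?thesis by simp
  qed
  finally show ?thesis by (simp add: mult_left_mono)
qed

lemma kernel_finite:
  assumes a: "0 < a"
  shows "(\<integral>\<^sup>+y. ep (ennreal (norm (grad_heat_kernel 1 (y::real^'d)))) a \<partial>lborel) < \<infinity>"
proof -
  define c where "c = (4 * pi) powr (- real CARD('d) / 2)"
  have "(\<integral>\<^sup>+y. ep (ennreal (norm (grad_heat_kernel 1 (y::real^'d)))) a \<partial>lborel)
      \<le> (\<integral>\<^sup>+y. ennreal (c powr a) * ennreal (exp (- (a / 8) * (norm (y::real^'d))\<^sup>2)) \<partial>lborel)"
  proof (intro nn_integral_mono)
    fix y :: "real^'d"
    have "ep (ennreal (norm (grad_heat_kernel 1 y))) a \<le> ep (ennreal (c * exp (- (norm y)\<^sup>2 / 8))) a"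
      using a grad1_bound[of y] by (intro ep_mono ennreal_leI) (auto simp: c_def)
    also have "\<dots> = ennreal ((c * exp (- (norm y)\<^sup>2 / 8)) powr a)"
      using a by (simp add: ep_ennreal c_def)
    also have "(c * exp (- (norm y)\<^sup>2 / 8)) powr a = c powr a * exp (- (a / 8) * (norm y)\<^sup>2)"
    proof -
      have "(c * exp (- (norm y)\<^sup>2 / 8)) powr a = c powr a * exp (- (norm y)\<^sup>2 / 8) powr a"
        using powr_mult by (auto simp: c_def)
      also have "exp (- (norm y)\<^sup>2 / 8) powr a = exp (- (a / 8) * (norm y)\<^sup>2)"
        by (simp add: powr_def)
      finally show ?thesis .
    qed
    finally show "ep (ennreal (norm (grad_heat_kernel 1 y))) a \<le> ennreal (c powr a) * ennreal (exp (- (a / 8) * (norm y)\<^sup>2))"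
      by (simp add: ennreal_mult)
  qed
  also have "\<dots> = ennreal (c powr a) * (\<integral>\<^sup>+y. ennreal (exp (- (a / 8) * (norm (y::real^'d))\<^sup>2)) \<partial>lborel)"
    by (rule nn_integral_cmult) measurable
  also have "\<dots> < \<infinity>" using gauss_finite[of "a / 8", where 'a="real^'d"] a by (simp add: ennreal_mult_less_top)
  finally show ?thesis .
qed




lemma kernel_bound:
  assumes a: "0 < a"
  obtains c where "c > 0" "\<And>r. 0 < r \<Longrightarrow>
     ep (\<integral>\<^sup>+z. ep (ennreal (norm (grad_heat_kernel r (z::real^'d)))) a \<partial>lborel) (1 / a)
       \<le> ennreal (c * r powr ((real CARD('d) / 2 - a * (real CARD('d) + 1) / 2) / a))"
proof -
  define J where "J = (\<integral>\<^sup>+y. ep (ennreal (norm (grad_heat_kernel 1 (y::real^'d)))) a \<partial>lborel)"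
  define M where "M = max 1 (enn2real J)"
  have Jf: "J < \<infinity>" unfolding J_def by (rule kernel_finite[OF a])
  have JM: "J \<le> ennreal M"
  proof -
    have "J = ennreal (enn2real J)" using Jf by (simp add: ennreal_enn2real_if less_top)
    also have "\<dots> \<le> ennreal M" unfolding M_def by (rule ennreal_leI) simp
    finally show ?thesis .
  qed
  have M: "M > 0" by (simp add: M_def)
  define e where "e = real CARD('d) / 2 - a * (real CARD('d) + 1) / 2"
  show ?thesis
  proof
    show "M powr (1 / a) > 0" using M by simp
    fix r :: real assume r: "0 < r"
    have "ep (\<integral>\<^sup>+z. ep (ennreal (norm (grad_heat_kernel r (z::real^'d)))) a \<partial>lborel) (1 / a)
        = ep (ennreal (r powr e) * J) (1 / a)"
      by (simp add: kernel_scaling[OF a r] J_def e_def)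
    also have "\<dots> \<le> ep (ennreal (r powr e * M)) (1 / a)"
    proof (intro ep_mono)
      have "ennreal (r powr e) * J \<le> ennreal (r powr e) * ennreal M" using JM by (rule mult_left_mono) simp
      then show "ennreal (r powr e) * J \<le> ennreal (r powr e * M)" using M by (simp add: ennreal_mult)
    qed (use a in simp)
    also have "\<dots> = ennreal ((r powr e * M) powr (1 / a))"
      using a M by (intro ep_ennreal) auto
    also have "(r powr e * M) powr (1 / a) = M powr (1 / a) * r powr (e / a)"
      using r M by (simp add: powr_mult powr_powr)
    finally show "ep (\<integral>\<^sup>+z. ep (ennreal (norm (grad_heat_kernel r (z::real^'d)))) a \<partial>lborel) (1 / a)
       \<le> ennreal (M powr (1 / a) * r powr ((real CARD('d) / 2 - a * (real CARD('d) + 1) / 2) / a))"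
      by (simp add: e_def)
  qed
qed

lemma powr_int_0:
  assumes b: "b > -1" and s: "0 \<le> s"
  shows "(\<integral>\<^sup>+x. ennreal (indicator {0..s} x * x powr b) \<partial>lborel) = ennreal (s powr (b + 1) / (b + 1))"
  using nn_integral_has_integral_lebesgue[OF _ has_integral_powr_from_0[OF b s]] by simp

lemma powr_int_s:
  assumes b: "b > -1" and s: "0 \<le> s"
  shows "(\<integral>\<^sup>+x. ennreal (indicator {0..s} x * (s - x) powr b) \<partial>lborel) = ennreal (s powr (b + 1) / (b + 1))"
proof -
  have "(\<integral>\<^sup>+x. ennreal (indicator {0..s} x * x powr b) \<partial>lborel)
      = ennreal \<bar>-1\<bar> * (\<integral>\<^sup>+x. ennreal (indicator {0..s} (s + (-1) * x) * (s + (-1) * x) powr b) \<partial>lborel)"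
    by (rule nn_integral_real_affine) auto
  also have "(\<lambda>x. indicator {0..s} (s + (-1) * x) :: real) = indicator {0..s}"
    by (auto simp: indicator_def fun_eq_iff)
  finally show ?thesis using powr_int_0[OF b s] by simp
qed

lemma beta_bound:
  assumes al: "\<alpha> > -1" and be: "\<beta> > -1"
  obtains C where "C \<ge> 0" "\<And>s. 0 < s \<Longrightarrow>
    (\<integral>\<^sup>+\<sigma>. ennreal ((s - \<sigma>) powr \<alpha> * \<sigma> powr \<beta>) * indicator {0<..<s} \<sigma> \<partial>lborel) \<le> ennreal (C * s powr (1 + \<alpha> + \<beta>))"
proof -
  define ma where "ma = max 1 (2 powr (- \<alpha>))"
  define mb where "mb = max 1 (2 powr (- \<beta>))"
  define C where "C = ma / (\<beta> + 1) + mb / (\<alpha> + 1)"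
  have ma: "ma > 0" "mb > 0" by (auto simp: ma_def mb_def)
  have hb: "v powr \<gamma> \<le> mm * s powr \<gamma>" if "s / 2 \<le> v" "v \<le> s" "0 < s" "mm = max 1 (2 powr (- \<gamma>))" for v s \<gamma> mm :: real
  proof (cases "\<gamma> \<ge> 0")
    case True
    then have "v powr \<gamma> \<le> s powr \<gamma>" using that by (intro powr_mono2) auto
    also have "\<dots> \<le> mm * s powr \<gamma>" using that mult_right_mono[of 1 mm "s powr \<gamma>"] by simp
    finally show ?thesis .
  next
    case False
    have "v powr \<gamma> \<le> (s / 2) powr \<gamma>" using that False by (intro powr_mono2') auto
    also have "(s / 2) powr \<gamma> = s powr \<gamma> / 2 powr \<gamma>" using that by (intro powr_divide)
    also have "\<dots> = 2 powr (- \<gamma>) * s powr \<gamma>" by (simp only: powr_minus divide_inverse mult.commute)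
    also have "\<dots> \<le> mm * s powr \<gamma>" using that by (intro mult_right_mono) auto
    finally show ?thesis .
  qed
  show ?thesis
  proof
    show "C \<ge> 0" using ma al be by (simp add: C_def)
    fix s :: real assume s: "0 < s"
    have pw: "ennreal ((s - \<sigma>) powr \<alpha> * \<sigma> powr \<beta>) * indicator {0<..<s} \<sigma>
        \<le> ennreal (ma * s powr \<alpha>) * ennreal (indicator {0..s} \<sigma> * \<sigma> powr \<beta>)
          + ennreal (mb * s powr \<beta>) * ennreal (indicator {0..s} \<sigma> * (s - \<sigma>) powr \<alpha>)" for \<sigma>
    proof (cases "\<sigma> \<in> {0<..<s}")
      case False then show ?thesis by simp
    next
      case True
      show ?thesis
      proof (cases "\<sigma> \<le> s / 2")
        case le: True
        have "(s - \<sigma>) powr \<alpha> * \<sigma> powr \<beta> \<le> (ma * s powr \<alpha>) * \<sigma> powr \<beta>"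
          using True le s by (intro mult_right_mono hb[OF _ _ s]) (auto simp: ma_def)
        then have "ennreal ((s - \<sigma>) powr \<alpha> * \<sigma> powr \<beta>) * indicator {0<..<s} \<sigma>
            \<le> ennreal (ma * s powr \<alpha>) * ennreal (indicator {0..s} \<sigma> * \<sigma> powr \<beta>)"
          using True ma by (simp add: ennreal_mult[symmetric] ennreal_leI)
        then show ?thesis by (rule order_trans) simp
      next
        case gt: False
        have "(s - \<sigma>) powr \<alpha> * \<sigma> powr \<beta> \<le> (s - \<sigma>) powr \<alpha> * (mb * s powr \<beta>)"
          using True gt s by (intro mult_left_mono hb[OF _ _ s]) (auto simp: mb_def)
        then have "ennreal ((s - \<sigma>) powr \<alpha> * \<sigma> powr \<beta>) * indicator {0<..<s} \<sigma>
            \<le> ennreal (mb * s powr \<beta>) * ennreal (indicator {0..s} \<sigma> * (s - \<sigma>) powr \<alpha>)"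
          using True ma by (simp add: ennreal_mult[symmetric] ennreal_leI mult.commute)
        then show ?thesis by (rule order_trans) simp
      qed
    qed
    have "(\<integral>\<^sup>+\<sigma>. ennreal ((s - \<sigma>) powr \<alpha> * \<sigma> powr \<beta>) * indicator {0<..<s} \<sigma> \<partial>lborel)
      \<le> (\<integral>\<^sup>+\<sigma>. ennreal (ma * s powr \<alpha>) * ennreal (indicator {0..s} \<sigma> * \<sigma> powr \<beta>)
          + ennreal (mb * s powr \<beta>) * ennreal (indicator {0..s} \<sigma> * (s - \<sigma>) powr \<alpha>) \<partial>lborel)"
      by (intro nn_integral_mono pw)
    also have "\<dots> = ennreal (ma * s powr \<alpha>) * ennreal (s powr (\<beta> + 1) / (\<beta> + 1))
        + ennreal (mb * s powr \<beta>) * ennreal (s powr (\<alpha> + 1) / (\<alpha> + 1))"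
      using s al be by (simp add: nn_integral_add nn_integral_cmult powr_int_0 powr_int_s)
    also have "\<dots> = ennreal (C * s powr (1 + \<alpha> + \<beta>))"
    proof -
      have "ma * s powr \<alpha> * (s powr (\<beta> + 1) / (\<beta> + 1)) + mb * s powr \<beta> * (s powr (\<alpha> + 1) / (\<alpha> + 1))
          = C * s powr (1 + \<alpha> + \<beta>)"
        using s by (simp add: C_def powr_add field_simps)
      then show ?thesis using s ma al be
        by (simp add: ennreal_mult[symmetric] ennreal_plus[symmetric] del: ennreal_plus)
    qed
    finally show "(\<integral>\<^sup>+\<sigma>. ennreal ((s - \<sigma>) powr \<alpha> * \<sigma> powr \<beta>) * indicator {0<..<s} \<sigma> \<partial>lborel) \<le> ennreal (C * s powr (1 + \<alpha> + \<beta>))" .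
  qed
qed




lemma norm_integral_le_nn:
  fixes f :: "'a \<Rightarrow> 'b::{banach, second_countable_topology}"
  shows "ennreal (norm (integral\<^sup>L M f)) \<le> (\<integral>\<^sup>+x. ennreal (norm (f x)) \<partial>M)"
proof (cases "integrable M f")
  case True then show ?thesis by (rule integral_norm_bound_ennreal)
next
  case False then show ?thesis by (simp add: not_integrable_integral_eq)
qed

lemma norm_set_integral_le_nn:
  fixes f :: "real \<Rightarrow> 'b::{banach, second_countable_topology}"
  shows "ennreal (norm (LINT s:A|lborel. f s)) \<le> (\<integral>\<^sup>+s. ennreal (norm (f s)) * indicator A s \<partial>lborel)"
proof -
  have "ennreal (norm (LINT s:A|lborel. f s)) \<le> (\<integral>\<^sup>+s. ennreal (norm (indicator A s *\<^sub>R f s)) \<partial>lborel)"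
    unfolding set_lebesgue_integral_def by (rule norm_integral_le_nn)
  also have "\<dots> = (\<integral>\<^sup>+s. ennreal (norm (f s)) * indicator A s \<partial>lborel)"
    by (intro nn_integral_cong) (auto simp: indicator_def)
  finally show ?thesis .
qed

definition Lfun :: "real \<Rightarrow> (real \<Rightarrow> real^'d \<Rightarrow> real) \<Rightarrow> real \<Rightarrow> real^'d \<Rightarrow> ennreal" where
  "Lfun \<tau> u s y = ennreal (1 / \<tau>) * (\<integral>\<^sup>+\<sigma>. (\<integral>\<^sup>+z. ennreal (norm (grad_heat_kernel ((s - \<sigma>) / \<tau>) (y - z))) * ennreal \<bar>u \<sigma> z\<bar> \<partial>lborel) * indicator {0<..<s} \<sigma> \<partial>lborel)"

lemma Lop_bound:
  assumes "0 < \<tau>"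
  shows "ennreal (norm (Lop \<tau> u s y)) \<le> Lfun \<tau> u s y"
proof -
  have "ennreal (norm (Lop \<tau> u s y)) = ennreal (1 / \<tau>) * ennreal (norm (LINT \<sigma>:{0<..<s}|lborel. (LINT z|lborel. u \<sigma> z *\<^sub>R grad_heat_kernel ((s - \<sigma>) / \<tau>) (y - z))))"
    unfolding Lop_def norm_scaleR using assms by (subst ennreal_mult) auto
  also have "\<dots> \<le> ennreal (1 / \<tau>) * (\<integral>\<^sup>+\<sigma>. ennreal (norm (LINT z|lborel. u \<sigma> z *\<^sub>R grad_heat_kernel ((s - \<sigma>) / \<tau>) (y - z))) * indicator {0<..<s} \<sigma> \<partial>lborel)"
    by (intro mult_left_mono norm_set_integral_le_nn) simp
  also have "\<dots> \<le> Lfun \<tau> u s y"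
    unfolding Lfun_def
  proof (intro mult_left_mono nn_integral_mono mult_right_mono)
    fix \<sigma>
    have "ennreal (norm (LINT z|lborel. u \<sigma> z *\<^sub>R grad_heat_kernel ((s - \<sigma>) / \<tau>) (y - z)))
        \<le> (\<integral>\<^sup>+z. ennreal (norm (u \<sigma> z *\<^sub>R grad_heat_kernel ((s - \<sigma>) / \<tau>) (y - z))) \<partial>lborel)"
      by (rule norm_integral_le_nn)
    also have "\<dots> = (\<integral>\<^sup>+z. ennreal (norm (grad_heat_kernel ((s - \<sigma>) / \<tau>) (y - z))) * ennreal \<bar>u \<sigma> z\<bar> \<partial>lborel)"
      by (intro nn_integral_cong) (simp add: ennreal_mult mult.commute)
    finally show "ennreal (norm (LINT z|lborel. u \<sigma> z *\<^sub>R grad_heat_kernel ((s - \<sigma>) / \<tau>) (y - z)))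
        \<le> (\<integral>\<^sup>+z. ennreal (norm (grad_heat_kernel ((s - \<sigma>) / \<tau>) (y - z))) * ennreal \<bar>u \<sigma> z\<bar> \<partial>lborel)" .
  qed auto
  finally show ?thesis .
qed

definition Hfun :: "real \<Rightarrow> (real \<Rightarrow> real^'d \<Rightarrow> real) \<Rightarrow> real \<Rightarrow> real^'d \<Rightarrow> ennreal" where
  "Hfun \<tau> u t x = (\<integral>\<^sup>+s. (\<integral>\<^sup>+y. ennreal (norm (grad_heat_kernel (t - s) (x - y))) * (ennreal \<bar>u s y\<bar> * Lfun \<tau> u s y) \<partial>lborel) * indicator {0<..<t} s \<partial>lborel)"

lemma Bop_bound:
  assumes "0 < \<tau>"
  shows "ennreal \<bar>Bop \<tau> u u t x\<bar> \<le> Hfun \<tau> u t x"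
proof -
  have "ennreal \<bar>Bop \<tau> u u t x\<bar> = ennreal (norm (LINT s:{0<..<t}|lborel. (LINT y|lborel. grad_heat_kernel (t - s) (x - y) \<bullet> (u s y *\<^sub>R Lop \<tau> u s y))))"
    by (simp add: Bop_def)
  also have "\<dots> \<le> (\<integral>\<^sup>+s. ennreal (norm (LINT y|lborel. grad_heat_kernel (t - s) (x - y) \<bullet> (u s y *\<^sub>R Lop \<tau> u s y))) * indicator {0<..<t} s \<partial>lborel)"
    by (rule norm_set_integral_le_nn)
  also have "\<dots> \<le> Hfun \<tau> u t x"
    unfolding Hfun_def
  proof (intro nn_integral_mono mult_right_mono)
    fix s
    have "ennreal (norm (LINT y|lborel. grad_heat_kernel (t - s) (x - y) \<bullet> (u s y *\<^sub>R Lop \<tau> u s y)))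
        \<le> (\<integral>\<^sup>+y. ennreal (norm (grad_heat_kernel (t - s) (x - y) \<bullet> (u s y *\<^sub>R Lop \<tau> u s y))) \<partial>lborel)"
      by (rule norm_integral_le_nn)
    also have "\<dots> \<le> (\<integral>\<^sup>+y. ennreal (norm (grad_heat_kernel (t - s) (x - y))) * (ennreal \<bar>u s y\<bar> * Lfun \<tau> u s y) \<partial>lborel)"
    proof (intro nn_integral_mono)
      fix y
      have "norm (grad_heat_kernel (t - s) (x - y) \<bullet> (u s y *\<^sub>R Lop \<tau> u s y))
          \<le> norm (grad_heat_kernel (t - s) (x - y)) * (\<bar>u s y\<bar> * norm (Lop \<tau> u s y))"
        using Cauchy_Schwarz_ineq2[of "grad_heat_kernel (t - s) (x - y)" "u s y *\<^sub>R Lop \<tau> u s y"]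
        by simp
      then have "ennreal (norm (grad_heat_kernel (t - s) (x - y) \<bullet> (u s y *\<^sub>R Lop \<tau> u s y)))
          \<le> ennreal (norm (grad_heat_kernel (t - s) (x - y))) * (ennreal \<bar>u s y\<bar> * ennreal (norm (Lop \<tau> u s y)))"
        by (simp add: ennreal_mult[symmetric] ennreal_leI)
      also have "\<dots> \<le> ennreal (norm (grad_heat_kernel (t - s) (x - y))) * (ennreal \<bar>u s y\<bar> * Lfun \<tau> u s y)"
        by (intro mult_left_mono Lop_bound assms) auto
      finally show "ennreal (norm (grad_heat_kernel (t - s) (x - y) \<bullet> (u s y *\<^sub>R Lop \<tau> u s y)))
          \<le> ennreal (norm (grad_heat_kernel (t - s) (x - y))) * (ennreal \<bar>u s y\<bar> * Lfun \<tau> u s y)" .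
    qed
    finally show "ennreal (norm (LINT y|lborel. grad_heat_kernel (t - s) (x - y) \<bullet> (u s y *\<^sub>R Lop \<tau> u s y)))
        \<le> (\<integral>\<^sup>+y. ennreal (norm (grad_heat_kernel (t - s) (x - y))) * (ennreal \<bar>u s y\<bar> * Lfun \<tau> u s y) \<partial>lborel)" .
  qed auto
  finally show ?thesis .
qed

lemma pred_in_ioo[measurable (raw)]:
  fixes f g :: "'a \<Rightarrow> real"
  assumes [measurable]: "f \<in> borel_measurable M" "g \<in> borel_measurable M"
  shows "Measurable.pred M (\<lambda>x. g x \<in> {0<..<f x})"
proof -
  have "Measurable.pred M (\<lambda>x. 0 < g x \<and> g x < f x)" by measurable
  then show ?thesis by simp
qed

lemma measurable_Lfun[measurable]:
  assumes [measurable]: "case_prod u \<in> borel_measurable (lborel \<Otimes>\<^sub>M lborel)"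
  shows "(\<lambda>(s, y). Lfun \<tau> u s y) \<in> borel_measurable (lborel \<Otimes>\<^sub>M lborel)"
  unfolding Lfun_def by measurable




lemma L_bound:
  fixes u :: "real \<Rightarrow> real^'d \<Rightarrow> real"
  assumes um[measurable]: "case_prod u \<in> borel_measurable (lborel \<Otimes>\<^sub>M lborel)"
    and tau: "0 < \<tau>" and nu: "0 < \<nu>"
    and pq: "1 \<le> a" "1 \<le> p" "1 \<le> q" "1 / a + 1 / p = 1 + 1 / q"
    and c: "0 < c" "\<And>r. 0 < r \<Longrightarrow> ep (\<integral>\<^sup>+z. ep (ennreal (norm (grad_heat_kernel r (z::real^'d)))) a \<partial>lborel) (1 / a) \<le> ennreal (c * r powr e)"
    and Cb: "0 \<le> Cb" "\<And>s. 0 < s \<Longrightarrow> (\<integral>\<^sup>+\<sigma>. ennreal ((s - \<sigma>) powr e * \<sigma> powr \<beta>) * indicator {0<..<s} \<sigma> \<partial>lborel) \<le> ennreal (Cb * s powr (1 + e + \<beta>))"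
    and hyp: "AE \<sigma> in lborel. 0 < \<sigma> \<longrightarrow> ep (\<integral>\<^sup>+y. ep (ennreal \<bar>u \<sigma> y\<bar>) p \<partial>lborel) (1 / p) \<le> ennreal (\<nu> * \<sigma> powr \<beta>)"
    and s: "0 < s"
  shows "ep (\<integral>\<^sup>+y. ep (Lfun \<tau> u s y) q \<partial>lborel) (1 / q) \<le> ennreal ((1 / \<tau>) * (c * \<tau> powr (- e) * \<nu> * Cb * s powr (1 + e + \<beta>)))"
proof -
  define K where "K \<sigma> w = ennreal (norm (grad_heat_kernel ((s - \<sigma>) / \<tau>) (w::real^'d)))" for \<sigma> w
  define g where "g \<sigma> z = ennreal \<bar>u \<sigma> z\<bar>" for \<sigma> z
  define Lh where "Lh y = (\<integral>\<^sup>+\<sigma>. (\<integral>\<^sup>+z. K \<sigma> (y - z) * g \<sigma> z \<partial>lborel) * indicator {0<..<s} \<sigma> \<partial>lborel)" for y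
  define k where "k \<sigma> = c * ((s - \<sigma>) / \<tau>) powr e" for \<sigma>
  define G where "G \<sigma> = \<nu> * \<sigma> powr \<beta>" for \<sigma>
  define V where "V = c * \<tau> powr (- e) * \<nu> * Cb * s powr (1 + e + \<beta>)"
  have V: "0 \<le> V" using c nu Cb tau s by (simp add: V_def)
  have [measurable]: "case_prod K \<in> borel_measurable (lborel \<Otimes>\<^sub>M lborel)" unfolding K_def by measurable
  have [measurable]: "case_prod g \<in> borel_measurable (lborel \<Otimes>\<^sub>M lborel)" unfolding g_def by measurable
  have [measurable]: "k \<in> borel_measurable borel" "G \<in> borel_measurable borel" unfolding k_def G_def by measurable
  have Lf: "Lfun \<tau> u s y = ennreal (1 / \<tau>) * Lh y" for y
    by (simp add: Lfun_def Lh_def K_def g_def)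
  have "(\<integral>\<^sup>+y. ep (Lh y) q \<partial>lborel) \<le> ep (\<integral>\<^sup>+\<sigma>. ennreal (k \<sigma> * G \<sigma>) * indicator {0<..<s} \<sigma> \<partial>lborel) q"
    unfolding Lh_def
  proof (rule styoung[where a=a and m=p])
    show "\<And>\<sigma>. \<sigma> \<in> {0<..<s} \<Longrightarrow> 0 < k \<sigma>" using c tau by (simp add: k_def)
    show "\<And>\<sigma>. \<sigma> \<in> {0<..<s} \<Longrightarrow> 0 < G \<sigma>" using nu by (simp add: G_def)
    show "\<And>\<sigma>. \<sigma> \<in> {0<..<s} \<Longrightarrow> ep (\<integral>\<^sup>+z. ep (K \<sigma> z) a \<partial>lborel) (1 / a) \<le> ennreal (k \<sigma>)"
      unfolding K_def k_def using tau by (intro c(2)) auto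
    show "AE \<sigma> in lborel. \<sigma> \<in> {0<..<s} \<longrightarrow> ep (\<integral>\<^sup>+y. ep (g \<sigma> y) p \<partial>lborel) (1 / p) \<le> ennreal (G \<sigma>)"
      using hyp by eventually_elim (auto simp: g_def G_def)
  qed (use pq in auto)
  also have "(\<integral>\<^sup>+\<sigma>. ennreal (k \<sigma> * G \<sigma>) * indicator {0<..<s} \<sigma> \<partial>lborel)
      = (\<integral>\<^sup>+\<sigma>. ennreal (c * \<tau> powr (- e) * \<nu>) * (ennreal ((s - \<sigma>) powr e * \<sigma> powr \<beta>) * indicator {0<..<s} \<sigma>) \<partial>lborel)"
  proof (intro nn_integral_cong)
    fix \<sigma>
    show "ennreal (k \<sigma> * G \<sigma>) * indicator {0<..<s} \<sigma> = ennreal (c * \<tau> powr (- e) * \<nu>) * (ennreal ((s - \<sigma>) powr e * \<sigma> powr \<beta>) * indicator {0<..<s} \<sigma>)"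
    proof (cases "\<sigma> \<in> {0<..<s}")
      case True
      have "((s - \<sigma>) / \<tau>) powr e = (s - \<sigma>) powr e * \<tau> powr (- e)"
      proof -
        have "((s - \<sigma>) / \<tau>) powr e = (s - \<sigma>) powr e / \<tau> powr e"
          by (rule powr_divide)
        also have "\<dots> = (s - \<sigma>) powr e * \<tau> powr (- e)" by (simp only: powr_minus divide_inverse)
        finally show ?thesis .
      qed
      then have "k \<sigma> * G \<sigma> = (c * \<tau> powr (- e) * \<nu>) * ((s - \<sigma>) powr e * \<sigma> powr \<beta>)"
        by (simp add: k_def G_def mult_ac)
      then show ?thesis using True c nu by (simp add: ennreal_mult)
    qed simp
  qed
  also have "\<dots> = ennreal (c * \<tau> powr (- e) * \<nu>) * (\<integral>\<^sup>+\<sigma>. ennreal ((s - \<sigma>) powr e * \<sigma> powr \<beta>) * indicator {0<..<s} \<sigma> \<partial>lborel)"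
    by (rule nn_integral_cmult) measurable
  also have "\<dots> \<le> ennreal (c * \<tau> powr (- e) * \<nu>) * ennreal (Cb * s powr (1 + e + \<beta>))"
    by (intro mult_left_mono Cb(2) s) simp
  also have "\<dots> = ennreal V"
  proof -
    have "V = (c * \<tau> powr (- e) * \<nu>) * (Cb * s powr (1 + e + \<beta>))" by (simp add: V_def mult_ac)
    then show ?thesis using c nu Cb by (simp add: ennreal_mult)
  qed
  finally have W: "(\<integral>\<^sup>+y. ep (Lh y) q \<partial>lborel) \<le> ep (ennreal V) q"
    using pq by (meson ep_mono order_trans zero_le_one order.trans[OF zero_le_one]) 
  have "(\<integral>\<^sup>+y. ep (Lfun \<tau> u s y) q \<partial>lborel) = (\<integral>\<^sup>+y. ep (ennreal (1 / \<tau>)) q * ep (Lh y) q \<partial>lborel)"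
    using pq by (simp add: Lf ep_mult)
  also have "\<dots> = ep (ennreal (1 / \<tau>)) q * (\<integral>\<^sup>+y. ep (Lh y) q \<partial>lborel)"
    by (rule nn_integral_cmult) (simp add: Lh_def)
  also have "\<dots> \<le> ep (ennreal (1 / \<tau>)) q * ep (ennreal V) q"
    using W by (rule mult_left_mono) simp
  also have "\<dots> = ep (ennreal (1 / \<tau>) * ennreal V) q" using pq by (simp add: ep_mult)
  finally have "ep (\<integral>\<^sup>+y. ep (Lfun \<tau> u s y) q \<partial>lborel) (1 / q) \<le> ep (ep (ennreal (1 / \<tau>) * ennreal V) q) (1 / q)"
    using pq by (intro ep_mono) auto
  also have "\<dots> = ennreal (1 / \<tau>) * ennreal V" using pq by (simp add: ep_ep)
  also have "\<dots> = ennreal ((1 / \<tau>) * V)" using tau V by (subst ennreal_mult) auto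
  finally show ?thesis by (simp add: V_def)
qed




lemma Lpnorm_ep:
  assumes "0 < r"
  shows "Lpnorm r f = ep (\<integral>\<^sup>+x. ep (ennreal \<bar>f x\<bar>) r \<partial>lborel) (1 / r)"
  using assms by (simp add: Lpnorm_def ep_def Let_def)

lemma B_core:
  fixes u :: "real \<Rightarrow> real^'d \<Rightarrow> real"
  assumes um[measurable]: "case_prod u \<in> borel_measurable (lborel \<Otimes>\<^sub>M lborel)"
    and tau: "0 < \<tau>" and nu: "0 < \<nu>"
    and n2: "2 \<le> real CARD('d)"
    and pq: "1 \<le> a" "1 \<le> p" "1 \<le> q" "1 / a + 1 / p = 1 + 1 / q" "1 / p + 1 / q = 2 / real CARD('d)"
    and c: "0 < c" "\<And>r. 0 < r \<Longrightarrow> ep (\<integral>\<^sup>+z. ep (ennreal (norm (grad_heat_kernel r (z::real^'d)))) a \<partial>lborel) (1 / a) \<le> ennreal (c * r powr e)"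
    and Cb: "0 < Cb" "\<And>s. 0 < s \<Longrightarrow> (\<integral>\<^sup>+\<sigma>. ennreal ((s - \<sigma>) powr e * \<sigma> powr \<beta>) * indicator {0<..<s} \<sigma> \<partial>lborel) \<le> ennreal (Cb * s powr (1 + e + \<beta>))"
    and c1: "0 < c1" "\<And>r. 0 < r \<Longrightarrow> (\<integral>\<^sup>+z. ennreal (norm (grad_heat_kernel r (z::real^'d))) \<partial>lborel) \<le> ennreal (c1 * r powr (- 1 / 2))"
    and C0: "0 \<le> C0" "\<And>s. 0 < s \<Longrightarrow> (\<integral>\<^sup>+\<sigma>. ennreal ((s - \<sigma>) powr (- 1 / 2) * \<sigma> powr (- 1 / 2)) * indicator {0<..<s} \<sigma> \<partial>lborel) \<le> ennreal (C0 * s powr (1 + - 1 / 2 + - 1 / 2))"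
    and ex: "\<beta> + (1 + e + \<beta>) = - 1 / 2"
    and hyp: "AE \<sigma> in lborel. 0 < \<sigma> \<longrightarrow> ep (\<integral>\<^sup>+y. ep (ennreal \<bar>u \<sigma> y\<bar>) p \<partial>lborel) (1 / p) \<le> ennreal (\<nu> * \<sigma> powr \<beta>)"
    and t: "0 < t"
  shows "Lpnorm (real CARD('d) / 2) (Bop \<tau> u u t) \<le> ennreal (c1 * C0 * (\<nu> * ((1 / \<tau>) * (c * \<tau> powr (- e) * \<nu> * Cb))))"
proof -
  define n where "n = real CARD('d)"
  have n: "2 \<le> n" using n2 by (simp add: n_def)
  define GL where "GL s = (1 / \<tau>) * (c * \<tau> powr (- e) * \<nu> * Cb * s powr (1 + e + \<beta>))" for s
  have Lb: "0 < s \<Longrightarrow> ep (\<integral>\<^sup>+y. ep (Lfun \<tau> u s y) q \<partial>lborel) (1 / q) \<le> ennreal (GL s)" for s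
    unfolding GL_def by (rule L_bound[OF um tau nu pq(1-4) c Cb(1)[THEN less_imp_le] Cb(2) hyp])
  define Gc where "Gc = \<nu> * ((1 / \<tau>) * (c * \<tau> powr (- e) * \<nu> * Cb))"
  have Gc: "0 < Gc" using nu tau c Cb by (simp add: Gc_def)
  define G where "G s = Gc * s powr (- 1 / 2)" for s
  have GG: "0 < s \<Longrightarrow> (\<nu> * s powr \<beta>) * GL s = G s" for s
  proof -
    assume s: "0 < s"
    have "(\<nu> * s powr \<beta>) * GL s = Gc * (s powr \<beta> * s powr (1 + e + \<beta>))"
      by (simp add: GL_def Gc_def mult_ac)
    also have "s powr \<beta> * s powr (1 + e + \<beta>) = s powr (- 1 / 2)"
      by (simp only: powr_add[symmetric] ex)
    finally show ?thesis by (simp add: G_def)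
  qed
  define \<theta> where "\<theta> = n / (2 * p)"
  have th: "0 \<le> \<theta>" "\<theta> \<le> 1" "p * \<theta> = n / 2" "q * (1 - \<theta>) = n / 2" "\<theta> * (2 / n) = 1 / p" "(1 - \<theta>) * (2 / n) = 1 / q"
  proof -
    have "0 \<le> 1 / q" using pq(3) by simp
    then have "1 / p \<le> 2 / n" using pq(5) unfolding n_def by linarith
    then show "0 \<le> \<theta>" "\<theta> \<le> 1" using pq n by (auto simp: \<theta>_def field_simps)
    show "p * \<theta> = n / 2" using pq by (simp add: \<theta>_def)
    show "\<theta> * (2 / n) = 1 / p" using n by (simp add: \<theta>_def)
    have "1 - \<theta> = n / (2 * q)" using pq(5) n pq(2,3) unfolding n_def[symmetric] \<theta>_def by (simp add: field_simps)
    then show "q * (1 - \<theta>) = n / 2" "(1 - \<theta>) * (2 / n) = 1 / q" using pq n by auto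
  qed
  define K where "K s z = ennreal (norm (grad_heat_kernel (t - s) (z::real^'d)))" for s z
  define g where "g s y = ennreal \<bar>u s y\<bar> * Lfun \<tau> u s y" for s y
  define k where "k s = c1 * (t - s) powr (- 1 / 2)" for s
  have [measurable]: "case_prod K \<in> borel_measurable (lborel \<Otimes>\<^sub>M lborel)" unfolding K_def by measurable
  have [measurable]: "case_prod g \<in> borel_measurable (lborel \<Otimes>\<^sub>M lborel)"
  proof -
    have "(\<lambda>(s, y). Lfun \<tau> u s y) \<in> borel_measurable (lborel \<Otimes>\<^sub>M lborel)" by (rule measurable_Lfun[OF um])
    then show ?thesis unfolding g_def by measurable
  qed
  have [measurable]: "k \<in> borel_measurable borel" "G \<in> borel_measurable borel" unfolding k_def G_def by measurable
  have main: "(\<integral>\<^sup>+x. ep (\<integral>\<^sup>+s. (\<integral>\<^sup>+y. K s (x - y) * g s y \<partial>lborel) * indicator {0<..<t} s \<partial>lborel) (n / 2) \<partial>lborel)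
      \<le> ep (\<integral>\<^sup>+s. ennreal (k s * G s) * indicator {0<..<t} s \<partial>lborel) (n / 2)"
  proof (rule styoung[where a=1 and m="n / 2"])
    show "\<And>s. s \<in> {0<..<t} \<Longrightarrow> 0 < k s" using c1 by (simp add: k_def)
    show "\<And>s. s \<in> {0<..<t} \<Longrightarrow> 0 < G s" using Gc by (simp add: G_def)
    show "\<And>s. s \<in> {0<..<t} \<Longrightarrow> ep (\<integral>\<^sup>+z. ep (K s z) 1 \<partial>lborel) (1 / 1) \<le> ennreal (k s)"
      unfolding K_def k_def using c1(2) by simp
    show "AE s in lborel. s \<in> {0<..<t} \<longrightarrow> ep (\<integral>\<^sup>+y. ep (g s y) (n / 2) \<partial>lborel) (1 / (n / 2)) \<le> ennreal (G s)"
      using hyp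
    proof eventually_elim
      case (elim s)
      show ?case
      proof
        assume "s \<in> {0<..<t}"
        then have s: "0 < s" by simp
        have Um[measurable]: "(\<lambda>y. ep (ennreal \<bar>u s y\<bar>) p) \<in> borel_measurable lborel" by measurable
        have Lm[measurable]: "(\<lambda>y. ep (Lfun \<tau> u s y) q) \<in> borel_measurable lborel"
        proof -
          have "(\<lambda>(s, y). Lfun \<tau> u s y) \<in> borel_measurable (lborel \<Otimes>\<^sub>M lborel)" by (rule measurable_Lfun[OF um])
          then show ?thesis by measurable
        qed
        have "(\<integral>\<^sup>+y. ep (g s y) (n / 2) \<partial>lborel)
            = (\<integral>\<^sup>+y. ep (ep (ennreal \<bar>u s y\<bar>) p) \<theta> * ep (ep (Lfun \<tau> u s y) q) (1 - \<theta>) \<partial>lborel)"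
          using th pq n by (simp add: g_def ep_mult ep_ep del: ep_1) (simp only: th(3,4))
        also have "\<dots> \<le> ep (\<integral>\<^sup>+y. ep (ennreal \<bar>u s y\<bar>) p \<partial>lborel) \<theta> * ep (\<integral>\<^sup>+y. ep (Lfun \<tau> u s y) q \<partial>lborel) (1 - \<theta>)"
          by (rule holder2) (use th in auto)
        finally have "ep (\<integral>\<^sup>+y. ep (g s y) (n / 2) \<partial>lborel) (2 / n)
            \<le> ep (ep (\<integral>\<^sup>+y. ep (ennreal \<bar>u s y\<bar>) p \<partial>lborel) \<theta> * ep (\<integral>\<^sup>+y. ep (Lfun \<tau> u s y) q \<partial>lborel) (1 - \<theta>)) (2 / n)"
          using n by (intro ep_mono) auto
        also have "\<dots> = ep (\<integral>\<^sup>+y. ep (ennreal \<bar>u s y\<bar>) p \<partial>lborel) (1 / p) * ep (\<integral>\<^sup>+y. ep (Lfun \<tau> u s y) q \<partial>lborel) (1 / q)"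
          using th n by (simp add: ep_mult ep_ep)
        also have "\<dots> \<le> ennreal (\<nu> * s powr \<beta>) * ennreal (GL s)"
          using elim s Lb[OF s] by (intro mult_mono) auto
        also have "\<dots> = ennreal (G s)"
        proof -
          have "0 \<le> GL s" using s tau c nu Cb by (simp add: GL_def)
          then show ?thesis using s nu by (simp add: GG[OF s, symmetric] ennreal_mult)
        qed
        finally show "ep (\<integral>\<^sup>+y. ep (g s y) (n / 2) \<partial>lborel) (1 / (n / 2)) \<le> ennreal (G s)" by simp
      qed
    qed
  qed (use n in auto)
  have "(\<integral>\<^sup>+s. ennreal (k s * G s) * indicator {0<..<t} s \<partial>lborel)
      = (\<integral>\<^sup>+s. ennreal (c1 * Gc) * (ennreal ((t - s) powr (- 1 / 2) * s powr (- 1 / 2)) * indicator {0<..<t} s) \<partial>lborel)"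
  proof (intro nn_integral_cong)
    fix s
    have "k s * G s = (c1 * Gc) * ((t - s) powr (- 1 / 2) * s powr (- 1 / 2))" by (simp add: k_def G_def mult_ac)
    then show "ennreal (k s * G s) * indicator {0<..<t} s = ennreal (c1 * Gc) * (ennreal ((t - s) powr (- 1 / 2) * s powr (- 1 / 2)) * indicator {0<..<t} s)"
      using c1 Gc by (simp add: ennreal_mult mult.assoc)
  qed
  also have "\<dots> = ennreal (c1 * Gc) * (\<integral>\<^sup>+s. ennreal ((t - s) powr (- 1 / 2) * s powr (- 1 / 2)) * indicator {0<..<t} s \<partial>lborel)"
    by (rule nn_integral_cmult) measurable
  also have "\<dots> \<le> ennreal (c1 * Gc) * ennreal (C0 * t powr (1 + - 1 / 2 + - 1 / 2))"
    by (intro mult_left_mono C0(2) t) simp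
  also have "\<dots> = ennreal (c1 * C0 * Gc)"
    using t c1 Gc C0 by (simp add: ennreal_mult[symmetric] mult_ac)
  finally have W: "(\<integral>\<^sup>+s. ennreal (k s * G s) * indicator {0<..<t} s \<partial>lborel) \<le> ennreal (c1 * C0 * Gc)" .
  have "Lpnorm (n / 2) (Bop \<tau> u u t) = ep (\<integral>\<^sup>+x. ep (ennreal \<bar>Bop \<tau> u u t x\<bar>) (n / 2) \<partial>lborel) (1 / (n / 2))"
    using n by (intro Lpnorm_ep) auto
  also have "\<dots> \<le> ep (\<integral>\<^sup>+x. ep (Hfun \<tau> u t x) (n / 2) \<partial>lborel) (1 / (n / 2))"
    using n by (intro ep_mono nn_integral_mono Bop_bound tau) auto
  also have "Hfun \<tau> u t = (\<lambda>x. \<integral>\<^sup>+s. (\<integral>\<^sup>+y. K s (x - y) * g s y \<partial>lborel) * indicator {0<..<t} s \<partial>lborel)"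
    by (simp add: Hfun_def K_def g_def fun_eq_iff)
  also have "ep (\<integral>\<^sup>+x. ep (\<integral>\<^sup>+s. (\<integral>\<^sup>+y. K s (x - y) * g s y \<partial>lborel) * indicator {0<..<t} s \<partial>lborel) (n / 2) \<partial>lborel) (1 / (n / 2))
      \<le> ep (ep (ennreal (c1 * C0 * Gc)) (n / 2)) (1 / (n / 2))"
    using n by (intro ep_mono order.trans[OF main] W) auto
  also have "\<dots> = ennreal (c1 * C0 * Gc)" using n by (simp add: ep_ep)
  finally show ?thesis by (simp add: n_def Gc_def)
qed




lemma triple_norm_AE:
  fixes u :: "real \<Rightarrow> real^'d \<Rightarrow> real"
  assumes fin: "triple_norm p u < \<infinity>"
  shows "AE t in lborel. 0 < t \<longrightarrow> ennreal (t powr (1 - real CARD('d) / (2 * p))) * Lpnorm p (u t) \<le> triple_norm p u"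
proof -
  define S where "S = {M. AE t in lborel. t > 0 \<longrightarrow>
      ennreal (t powr (1 - real CARD('d) / (2 * p))) * Lpnorm p (u t) \<le> M}"
  define N where "N = triple_norm p u"
  have NS: "N = Inf S" unfolding N_def S_def triple_norm_def ..
  have "\<forall>k::nat. \<exists>M\<in>S. M < N + ennreal (1 / Suc k)"
  proof
    fix k :: nat
    have "N < N + ennreal (1 / Suc k)" using fin unfolding N_def[symmetric]
      by (simp add: ennreal_less_top ennreal_add_left_cancel_less)
    then show "\<exists>M\<in>S. M < N + ennreal (1 / Suc k)" unfolding NS by (simp add: Inf_less_iff)
  qed
  then obtain M where M: "\<And>k. M k \<in> S" "\<And>k. M k < N + ennreal (1 / Suc k)" by metis
  have "AE t in lborel. \<forall>k. 0 < t \<longrightarrow> ennreal (t powr (1 - real CARD('d) / (2 * p))) * Lpnorm p (u t) \<le> M k"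
  proof -
    have "\<forall>k. AE t in lborel. 0 < t \<longrightarrow> ennreal (t powr (1 - real CARD('d) / (2 * p))) * Lpnorm p (u t) \<le> M k"
      using M(1) unfolding S_def by simp
    then have "AE t in lborel. \<forall>k. 0 < t \<longrightarrow> ennreal (t powr (1 - real CARD('d) / (2 * p))) * Lpnorm p (u t) \<le> M k"
      by (subst AE_all_countable) auto
    then show ?thesis by simp
  qed
  then show ?thesis
  proof eventually_elim
    case (elim t)
    show ?case
    proof
      assume t: "0 < t"
      show "ennreal (t powr (1 - real CARD('d) / (2 * p))) * Lpnorm p (u t) \<le> triple_norm p u"
        unfolding N_def[symmetric]
      proof (rule ennreal_le_epsilon)
        fix e :: real assume e: "0 < e"
        obtain k :: nat where k: "1 / Suc k < e"
          using e by (metis nat_approx_posE)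
        have "ennreal (t powr (1 - real CARD('d) / (2 * p))) * Lpnorm p (u t) \<le> M k" using elim t by auto
        also have "\<dots> \<le> N + ennreal (1 / Suc k)" using M(2)[of k] by simp
        also have "\<dots> \<le> N + ennreal e" using k by (intro add_left_mono ennreal_leI) simp
        finally show "ennreal (t powr (1 - real CARD('d) / (2 * p))) * Lpnorm p (u t) \<le> N + ennreal e" .
      qed
    qed
  qed
qed

theorem lemma3p7:
  fixes p :: real
  assumes "CARD('d) \<ge> 2"
    and "2 * real CARD('d) / 3 < p" and "p \<le> real CARD('d)"
  shows "\<exists>C::real. \<forall>\<tau>>0. \<forall>u::real \<Rightarrow> real^'d \<Rightarrow> real. u \<in> Ep p \<longrightarrow>
           (\<forall>t>0. Lpnorm (real CARD('d) / 2) (Bop \<tau> u u t)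
                   \<le> ennreal (C * \<tau> powr (- 3 / 2 + real CARD('d) / p)) * (triple_norm p u)\<^sup>2)"
proof -
  define n where "n = real CARD('d)"
  have n2: "2 \<le> n" using assms(1) by (simp add: n_def)
  have pn: "2 * n / 3 < p" "p \<le> n" using assms(2,3) by (simp_all add: n_def)
  have p0: "0 < p" using pn n2 by linarith
  have p1: "1 \<le> p" using pn n2 by linarith
  have ip: "1 / p < 3 / (2 * n)" using pn n2 p0 by (simp add: field_simps)
  have ip2: "1 / n \<le> 1 / p" using pn p0 by (simp add: field_simps)
  define iq where "iq = 2 / n - 1 / p"
  have iq: "0 < iq" "iq \<le> 1"
  proof -
    have "n < 2 * p" using pn n2 by linarith
    then have "1 / p < 2 / n" using p0 n2 by (simp add: field_simps)
    then show "0 < iq" by (simp add: iq_def)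
    have "2 / n \<le> 1" using n2 by simp
    moreover have "0 < 1 / p" using p0 by simp
    ultimately show "iq \<le> 1" unfolding iq_def by linarith
  qed
  define q where "q = 1 / iq"
  have q1: "1 \<le> q" using iq by (simp add: q_def)
  have qi: "1 / q = iq" by (simp add: q_def)
  define ia where "ia = 1 + 2 / n - 2 / p"
  have ia: "0 < ia" "ia \<le> 1"
  proof -
    have "2 / p < 3 / n" using ip n2 p0 by (simp add: field_simps)
    moreover have "1 / n \<le> 1 / 2" using n2 by simp
    ultimately show "0 < ia" by (simp add: ia_def)
    show "ia \<le> 1" using ip2 by (simp add: ia_def)
  qed
  define a2 where "a2 = 1 / ia"
  have a21: "1 \<le> a2" using ia by (simp add: a2_def)
  have a2i: "1 / a2 = ia" by (simp add: a2_def)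
  have young_ex: "1 / a2 + 1 / p = 1 + 1 / q" unfolding a2i qi by (simp add: ia_def iq_def)
  have hold_ex: "1 / p + 1 / q = 2 / real CARD('d)" unfolding qi by (simp add: iq_def n_def)
  define e2 where "e2 = (real CARD('d) / 2 - a2 * (real CARD('d) + 1) / 2) / a2"
  have e2v: "e2 = 1 / 2 - n / p"
  proof -
    have "e2 = n / 2 * ia - (n + 1) / 2" using ia by (simp add: e2_def a2_def n_def field_simps)
    also have "\<dots> = 1 / 2 - n / p" using n2 by (simp add: ia_def field_simps)
    finally show ?thesis .
  qed
  define \<beta> where "\<beta> = n / (2 * p) - 1"
  have e2gt: "e2 > -1"
  proof -
    have "n / p < 3 / 2" using pn p0 by (simp add: field_simps)
    then show ?thesis by (simp add: e2v)
  qed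
  have \<beta>gt: "\<beta> > -1" using n2 p0 by (simp add: \<beta>_def)
  have ex: "\<beta> + (1 + e2 + \<beta>) = - 1 / 2" by (simp add: e2v \<beta>_def field_simps)
  obtain c2 where c2: "c2 > 0" "\<And>r. 0 < r \<Longrightarrow>
     ep (\<integral>\<^sup>+z. ep (ennreal (norm (grad_heat_kernel r (z::real^'d)))) a2 \<partial>lborel) (1 / a2) \<le> ennreal (c2 * r powr e2)"
    using kernel_bound[of a2, where 'd='d] a21 unfolding e2_def by auto
  obtain c1 where c1: "c1 > 0" "\<And>r. 0 < r \<Longrightarrow>
     ep (\<integral>\<^sup>+z. ep (ennreal (norm (grad_heat_kernel r (z::real^'d)))) 1 \<partial>lborel) (1 / 1)
       \<le> ennreal (c1 * r powr ((real CARD('d) / 2 - 1 * (real CARD('d) + 1) / 2) / 1))"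
    using kernel_bound[of 1, where 'd='d] by auto
  have c1': "(\<integral>\<^sup>+z. ennreal (norm (grad_heat_kernel r (z::real^'d))) \<partial>lborel) \<le> ennreal (c1 * r powr (- 1 / 2))" if "0 < r" for r
  proof -
    have "(real CARD('d) / 2 - 1 * (real CARD('d) + 1) / 2) / 1 = - 1 / 2" by (simp add: field_simps)
    then show ?thesis using c1(2)[OF that] by simp
  qed
  obtain Cb0 where Cb0: "Cb0 \<ge> 0" "\<And>s. 0 < s \<Longrightarrow>
    (\<integral>\<^sup>+\<sigma>. ennreal ((s - \<sigma>) powr e2 * \<sigma> powr \<beta>) * indicator {0<..<s} \<sigma> \<partial>lborel) \<le> ennreal (Cb0 * s powr (1 + e2 + \<beta>))"
    using beta_bound[OF e2gt \<beta>gt] by metis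
  define Cb where "Cb = Cb0 + 1"
  have Cb: "0 < Cb" "\<And>s. 0 < s \<Longrightarrow>
    (\<integral>\<^sup>+\<sigma>. ennreal ((s - \<sigma>) powr e2 * \<sigma> powr \<beta>) * indicator {0<..<s} \<sigma> \<partial>lborel) \<le> ennreal (Cb * s powr (1 + e2 + \<beta>))"
  proof -
    show "0 < Cb" using Cb0 by (simp add: Cb_def)
    fix s :: real assume s: "0 < s"
    have "ennreal (Cb0 * s powr (1 + e2 + \<beta>)) \<le> ennreal (Cb * s powr (1 + e2 + \<beta>))"
      using s by (intro ennreal_leI mult_right_mono) (auto simp: Cb_def)
    then show "(\<integral>\<^sup>+\<sigma>. ennreal ((s - \<sigma>) powr e2 * \<sigma> powr \<beta>) * indicator {0<..<s} \<sigma> \<partial>lborel) \<le> ennreal (Cb * s powr (1 + e2 + \<beta>))"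
      using Cb0(2)[OF s] by (rule order_trans[rotated])
  qed
  obtain C0 where C0: "C0 \<ge> 0" "\<And>s. 0 < s \<Longrightarrow>
    (\<integral>\<^sup>+\<sigma>. ennreal ((s - \<sigma>) powr (- 1 / 2) * \<sigma> powr (- 1 / 2)) * indicator {0<..<s} \<sigma> \<partial>lborel) \<le> ennreal (C0 * s powr (1 + - 1 / 2 + - 1 / 2))"
  proof -
    have h: "(- 1 / 2 :: real) > -1" by simp
    show ?thesis using beta_bound[OF h h] that by blast
  qed
  define C where "C = c1 * C0 * c2 * Cb"
  have C: "0 \<le> C" using c1 C0 c2 Cb by (simp add: C_def)
  show ?thesis
  proof (intro exI[of _ C] allI impI)
    fix \<tau> :: real and u :: "real \<Rightarrow> real^'d \<Rightarrow> real" and t :: real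
    assume tau: "0 < \<tau>" and uE: "u \<in> Ep p" and t: "0 < t"
    have um[measurable]: "case_prod u \<in> borel_measurable (lborel \<Otimes>\<^sub>M lborel)"
      using uE by (simp add: Ep_def case_prod_beta')
    have fin: "triple_norm p u < \<infinity>" using uE by (simp add: Ep_def)
    define \<nu>0 where "\<nu>0 = enn2real (triple_norm p u)"
    have N: "triple_norm p u = ennreal \<nu>0" "0 \<le> \<nu>0"
      using fin by (auto simp: \<nu>0_def ennreal_enn2real_if less_top)
    have hyp0: "AE \<sigma> in lborel. 0 < \<sigma> \<longrightarrow> ep (\<integral>\<^sup>+y. ep (ennreal \<bar>u \<sigma> y\<bar>) p \<partial>lborel) (1 / p) \<le> ennreal (\<nu>0 * \<sigma> powr \<beta>)"
      using triple_norm_AE[OF fin]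
    proof eventually_elim
      case (elim \<sigma>)
      show ?case
      proof
        assume s: "0 < \<sigma>"
        have ex1: "1 - real CARD('d) / (2 * p) = - \<beta>" by (simp add: \<beta>_def n_def)
        have one: "ennreal (\<sigma> powr \<beta>) * ennreal (\<sigma> powr (- \<beta>)) = 1"
          using s by (simp add: ennreal_mult[symmetric] powr_add[symmetric])
        have "Lpnorm p (u \<sigma>) = ennreal (\<sigma> powr \<beta>) * (ennreal (\<sigma> powr (- \<beta>)) * Lpnorm p (u \<sigma>))"
          by (simp add: mult.assoc[symmetric] one)
        also have "\<dots> \<le> ennreal (\<sigma> powr \<beta>) * ennreal \<nu>0"
          using elim s unfolding ex1 N by (intro mult_left_mono) auto
        also have "\<dots> = ennreal (\<nu>0 * \<sigma> powr \<beta>)" using N by (simp add: ennreal_mult mult.commute)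
        finally show "ep (\<integral>\<^sup>+y. ep (ennreal \<bar>u \<sigma> y\<bar>) p \<partial>lborel) (1 / p) \<le> ennreal (\<nu>0 * \<sigma> powr \<beta>)"
          using p0 by (simp add: Lpnorm_ep)
      qed
    qed
    define A where "A = C * \<tau> powr (- 3 / 2 + real CARD('d) / p)"
    have A: "0 \<le> A" using C by (simp add: A_def)
    have bnd: "Lpnorm (real CARD('d) / 2) (Bop \<tau> u u t) \<le> ennreal (A * (\<nu>0 + \<epsilon>)\<^sup>2)" if e: "0 < \<epsilon>" for \<epsilon>
    proof -
      define \<nu> where "\<nu> = \<nu>0 + \<epsilon>"
      have nu: "0 < \<nu>" using N e by (simp add: \<nu>_def)
      have hyp: "AE \<sigma> in lborel. 0 < \<sigma> \<longrightarrow> ep (\<integral>\<^sup>+y. ep (ennreal \<bar>u \<sigma> y\<bar>) p \<partial>lborel) (1 / p) \<le> ennreal (\<nu> * \<sigma> powr \<beta>)"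
        using hyp0
      proof eventually_elim
        case (elim \<sigma>)
        show ?case
        proof
          assume s: "0 < \<sigma>"
          have "ennreal (\<nu>0 * \<sigma> powr \<beta>) \<le> ennreal (\<nu> * \<sigma> powr \<beta>)"
            using e by (intro ennreal_leI mult_right_mono) (auto simp: \<nu>_def)
          then show "ep (\<integral>\<^sup>+y. ep (ennreal \<bar>u \<sigma> y\<bar>) p \<partial>lborel) (1 / p) \<le> ennreal (\<nu> * \<sigma> powr \<beta>)"
            using elim s by (meson order_trans)
        qed
      qed
      have "Lpnorm (real CARD('d) / 2) (Bop \<tau> u u t) \<le> ennreal (c1 * C0 * (\<nu> * ((1 / \<tau>) * (c2 * \<tau> powr (- e2) * \<nu> * Cb))))"
        by (rule B_core[OF um tau nu _ a21 p1 q1 young_ex hold_ex c2 Cb c1(1) c1' C0 ex hyp t])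
           (use n2 in \<open>simp add: n_def\<close>)
      also have "c1 * C0 * (\<nu> * ((1 / \<tau>) * (c2 * \<tau> powr (- e2) * \<nu> * Cb))) = A * (\<nu>0 + \<epsilon>)\<^sup>2"
      proof -
        have "(1 / \<tau>) * \<tau> powr (- e2) = \<tau> powr (- 3 / 2 + real CARD('d) / p)"
        proof -
          have "(1 / \<tau>) = \<tau> powr (-1)" using tau by (simp add: powr_neg_one)
          then have "(1 / \<tau>) * \<tau> powr (- e2) = \<tau> powr (-1) * \<tau> powr (- e2)" by simp
          also have "\<dots> = \<tau> powr (-1 + - e2)" by (simp only: powr_add[symmetric])
          also have "-1 + - e2 = - 3 / 2 + real CARD('d) / p" by (simp add: e2v n_def)
          finally show ?thesis .
        qed
        then show ?thesis by (simp add: A_def C_def \<nu>_def power2_eq_square mult_ac)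
      qed
      finally show ?thesis .
    qed
    have "Lpnorm (real CARD('d) / 2) (Bop \<tau> u u t) \<le> ennreal (A * (\<nu>0 + 0)\<^sup>2)"
    proof (rule tendsto_lowerbound)
      show "((\<lambda>\<epsilon>. ennreal (A * (\<nu>0 + \<epsilon>)\<^sup>2)) \<longlongrightarrow> ennreal (A * (\<nu>0 + 0)\<^sup>2)) (at_right 0)"
        by (intro tendsto_ennrealI tendsto_intros)
      show "\<forall>\<^sub>F \<epsilon> in at_right 0. Lpnorm (real CARD('d) / 2) (Bop \<tau> u u t) \<le> ennreal (A * (\<nu>0 + \<epsilon>)\<^sup>2)"
        using eventually_at_right_less[of "0::real"] by eventually_elim (rule bnd)
    qed simp
    also have "ennreal (A * (\<nu>0 + 0)\<^sup>2) = ennreal A * (triple_norm p u)\<^sup>2"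
      using A N by (simp add: ennreal_mult ennreal_power)
    finally show "Lpnorm (real CARD('d) / 2) (Bop \<tau> u u t) \<le> ennreal (C * \<tau> powr (- 3 / 2 + real CARD('d) / p)) * (triple_norm p u)\<^sup>2"
      by (simp add: A_def)
  qed
qed


end
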